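(* Let $\Gamma$ be a labelled graph with no triangle having an edge labelled $2$, and let $\Sigma$ be the Cayley complex of the Coxeter group $W_\Gamma$. Then for any two $2$-cells $\sigma,\tau$ of $\Sigma$ sharing an edge, and any hypergraph $\Lambda_\sigma$ intersecting $\sigma$, there is a hypergraph $\Lambda_\tau$ intersecting $\tau$ that is either disjoint from $\Lambda_\sigma$ or equal to $\Lambda_\sigma$.
   Context: $\Gamma$ is a finite simple graph with each edge labelled by an integer $\ge2$, vertex set $V\Gamma$. The Coxeter group $W_\Gamma$ has presentation $\langle V\Gamma\mid a^2=1\ (a\in V\Gamma),\ p_m(a,b)=p_m(b,a)$ for each edge $ab$ labelled $m\rangle$, where $p_m(a,b)$ is the alternating word $aba\cdots$ of length $m$. Its Cayley complex $\Sigma$ has vertex set $W_\Gamma$, one (undirected) edge $\{w,ws\}$ for each $w\in W_\Gamma$, $s\in V\Gamma$, and for each edge $ab$ of $\Gamma$ labelled $m$ and each coset $w\langle a,b\rangle$ a $2m$-gon $2$-cell glued along the cycle $w,wa,wab,\dots$ of length $2m$. Two edges of a $2m$-gon are opposite if they are at distance $m-1$ along its boundary. A hypergraph is a connected component of the graph whose vertices are the edges of $\Sigma$, with an edge for each $2$-cell and each pair of its opposite edges; it is realised geometrically in $\Sigma$ as the union of the straight segments in $2$-cells joining midpoints of the corresponding opposite edges (these pass through the centre of the cell). A hypergraph intersects a $2$-cell if its realisation meets that cell; disjointness refers to the geometric realisations. *)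

theory Defs
  imports Complex_Main
begin

definition labelled_graph :: "'v set \<Rightarrow> ('v \<Rightarrow> 'v \<Rightarrow> bool) \<Rightarrow> ('v \<Rightarrow> 'v \<Rightarrow> nat) \<Rightarrow> bool" where
  "labelled_graph V E lab \<longleftrightarrow> finite V \<and>
     (\<forall>a b. E a b \<longrightarrow> a \<in> V \<and> b \<in> V \<and> a \<noteq> b \<and> E b a \<and> lab a b = lab b a \<and> lab a b \<ge> 2)"

fun alt :: "'v \<Rightarrow> 'v \<Rightarrow> nat \<Rightarrow> 'v list" where
  "alt a b 0 = []"
| "alt a b (Suc n) = a # alt b a n"

inductive cox_eq :: "'v set \<Rightarrow> ('v \<Rightarrow> 'v \<Rightarrow> bool) \<Rightarrow> ('v \<Rightarrow> 'v \<Rightarrow> nat) \<Rightarrow> 'v list \<Rightarrow> 'v list \<Rightarrow> bool"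
  for V E lab where
  refl: "cox_eq V E lab u u"
| sym: "cox_eq V E lab u v \<Longrightarrow> cox_eq V E lab v u"
| trans: "cox_eq V E lab u v \<Longrightarrow> cox_eq V E lab v w \<Longrightarrow> cox_eq V E lab u w"
| inv: "a \<in> V \<Longrightarrow> cox_eq V E lab (u @ [a, a] @ v) (u @ v)"
| braid: "E a b \<Longrightarrow> cox_eq V E lab (u @ alt a b (lab a b) @ v) (u @ alt b a (lab a b) @ v)"

text \<open>Elements of W_Gamma: equivalence classes of words over V.\<close>
definition cls :: "'v set \<Rightarrow> ('v \<Rightarrow> 'v \<Rightarrow> bool) \<Rightarrow> ('v \<Rightarrow> 'v \<Rightarrow> nat) \<Rightarrow> 'v list \<Rightarrow> 'v list set" where
  "cls V E lab w = {u \<in> lists V. cox_eq V E lab w u}"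

definition sigma_edges :: "'v set \<Rightarrow> ('v \<Rightarrow> 'v \<Rightarrow> bool) \<Rightarrow> ('v \<Rightarrow> 'v \<Rightarrow> nat) \<Rightarrow> 'v list set set set" where
  "sigma_edges V E lab = {{cls V E lab w, cls V E lab (w @ [s])} | w s. w \<in> lists V \<and> s \<in> V}"

text \<open>The 2-cell for the coset w<a,b> (edge ab of Gamma), recorded with its edge {a,b}.\<close>
definition cell_of :: "'v set \<Rightarrow> ('v \<Rightarrow> 'v \<Rightarrow> bool) \<Rightarrow> ('v \<Rightarrow> 'v \<Rightarrow> nat) \<Rightarrow> 'v list \<Rightarrow> 'v \<Rightarrow> 'v
     \<Rightarrow> 'v set \<times> 'v list set set" where
  "cell_of V E lab w a b = ({a, b}, {cls V E lab (w @ u) | u. u \<in> lists {a, b}})"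

definition cells :: "'v set \<Rightarrow> ('v \<Rightarrow> 'v \<Rightarrow> bool) \<Rightarrow> ('v \<Rightarrow> 'v \<Rightarrow> nat) \<Rightarrow> ('v set \<times> 'v list set set) set" where
  "cells V E lab = {cell_of V E lab w a b | w a b. w \<in> lists V \<and> E a b}"

text \<open>The i-th boundary edge of the 2m-gon with boundary cycle w, wa, wab, ...\<close>
definition cedge :: "'v set \<Rightarrow> ('v \<Rightarrow> 'v \<Rightarrow> bool) \<Rightarrow> ('v \<Rightarrow> 'v \<Rightarrow> nat) \<Rightarrow> 'v list \<Rightarrow> 'v \<Rightarrow> 'v \<Rightarrow> nat
     \<Rightarrow> 'v list set set" where
  "cedge V E lab w a b i = {cls V E lab (w @ alt a b i), cls V E lab (w @ alt a b (Suc i))}"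

definition cell_edges :: "'v set \<Rightarrow> ('v \<Rightarrow> 'v \<Rightarrow> bool) \<Rightarrow> ('v \<Rightarrow> 'v \<Rightarrow> nat) \<Rightarrow> 'v set \<times> 'v list set set
     \<Rightarrow> 'v list set set set" where
  "cell_edges V E lab \<sigma> = {cedge V E lab w a b i | w a b i.
      w \<in> lists V \<and> E a b \<and> cell_of V E lab w a b = \<sigma> \<and> i < 2 * lab a b}"

definition opposite :: "'v set \<Rightarrow> ('v \<Rightarrow> 'v \<Rightarrow> bool) \<Rightarrow> ('v \<Rightarrow> 'v \<Rightarrow> nat) \<Rightarrow> 'v set \<times> 'v list set set
     \<Rightarrow> 'v list set set \<Rightarrow> 'v list set set \<Rightarrow> bool" where
  "opposite V E lab \<sigma> e f \<longleftrightarrow> (\<exists>w a b i. w \<in> lists V \<and> E a b \<and> cell_of V E lab w a b = \<sigma>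
      \<and> i < 2 * lab a b \<and> e = cedge V E lab w a b i
      \<and> f = cedge V E lab w a b ((i + lab a b) mod (2 * lab a b)))"

definition hyp_adj :: "'v set \<Rightarrow> ('v \<Rightarrow> 'v \<Rightarrow> bool) \<Rightarrow> ('v \<Rightarrow> 'v \<Rightarrow> nat)
     \<Rightarrow> 'v list set set \<Rightarrow> 'v list set set \<Rightarrow> bool" where
  "hyp_adj V E lab e f \<longleftrightarrow> (\<exists>\<sigma> \<in> cells V E lab. opposite V E lab \<sigma> e f)"

definition hypergraph :: "'v set \<Rightarrow> ('v \<Rightarrow> 'v \<Rightarrow> bool) \<Rightarrow> ('v \<Rightarrow> 'v \<Rightarrow> nat) \<Rightarrow> 'v list set set set \<Rightarrow> bool" where
  "hypergraph V E lab \<Lambda> \<longleftrightarrow> (\<exists>e \<in> sigma_edges V E lab. \<Lambda> = {f. (hyp_adj V E lab)\<^sup>*\<^sup>* e f})"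

text \<open>Points of Sigma relevant to realisations of hypergraphs:
  Mid e = midpoint of edge e; Centre s = centre of cell s;
  Half s e t = point of cell s at parameter t (0<t<1) on the straight segment from the
  midpoint of its boundary edge e to the centre of s.\<close>
datatype ('c, 'e) rpoint = Mid 'e | Centre 'c | Half 'c 'e real

definition segment_pts :: "'c \<Rightarrow> 'e \<Rightarrow> 'e \<Rightarrow> ('c, 'e) rpoint set" where
  "segment_pts \<sigma> e f = {Mid e, Mid f, Centre \<sigma>} \<union> {Half \<sigma> e t | t. 0 < t \<and> t < 1}
      \<union> {Half \<sigma> f t | t. 0 < t \<and> t < 1}"

definition realisation :: "'v set \<Rightarrow> ('v \<Rightarrow> 'v \<Rightarrow> bool) \<Rightarrow> ('v \<Rightarrow> 'v \<Rightarrow> nat) \<Rightarrow> 'v list set set set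
     \<Rightarrow> ('v set \<times> 'v list set set, 'v list set set) rpoint set" where
  "realisation V E lab \<Lambda> = \<Union>{segment_pts \<sigma> e f | \<sigma> e f.
      \<sigma> \<in> cells V E lab \<and> opposite V E lab \<sigma> e f \<and> e \<in> \<Lambda> \<and> f \<in> \<Lambda>}"

definition cell_pts :: "'v set \<Rightarrow> ('v \<Rightarrow> 'v \<Rightarrow> bool) \<Rightarrow> ('v \<Rightarrow> 'v \<Rightarrow> nat) \<Rightarrow> 'v set \<times> 'v list set set
     \<Rightarrow> ('v set \<times> 'v list set set, 'v list set set) rpoint set" where
  "cell_pts V E lab \<sigma> = {Centre \<sigma>} \<union> {Mid e | e. e \<in> cell_edges V E lab \<sigma>}
      \<union> {Half \<sigma> e t | e t. e \<in> cell_edges V E lab \<sigma> \<and> 0 < t \<and> t < 1}"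

definition intersects :: "'v set \<Rightarrow> ('v \<Rightarrow> 'v \<Rightarrow> bool) \<Rightarrow> ('v \<Rightarrow> 'v \<Rightarrow> nat) \<Rightarrow> 'v list set set set
     \<Rightarrow> 'v set \<times> 'v list set set \<Rightarrow> bool" where
  "intersects V E lab \<Lambda> \<sigma> \<longleftrightarrow> realisation V E lab \<Lambda> \<inter> cell_pts V E lab \<sigma> \<noteq> {}"

end

theory Submission
  imports Defs
begin

definition uu :: "real \<Rightarrow> nat \<Rightarrow> real" where "uu t n = sin (real n * t) / sin t"

lemma trig_id: fixes x y t :: real shows "sin (x+t)*sin (y+t) + sin x * sin y - cos t*(sin (x+t)*sin y + sin x*sin (y+t))
   = (sin t)^2 * cos (x - y)"
proof -
  have h: "cos t * cos t + sin t * sin t = 1" using sin_cos_squared_add[of t] by (simp add: power2_eq_square)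
  show ?thesis unfolding sin_add cos_diff power2_eq_square using h by algebra
qed

lemma uu_rec: "uu t (Suc (Suc n)) = 2 * cos t * uu t (Suc n) - uu t n"
proof -
  have "sin ((real n + 1) * t + t) + sin ((real n + 1) * t - t) = 2 * sin ((real n + 1) * t) * cos t"
    by (simp add: sin_add sin_diff)
  then have "sin (real (Suc (Suc n)) * t) = 2 * cos t * sin (real (Suc n) * t) - sin (real n * t)"
    by (simp add: algebra_simps)
  then show ?thesis unfolding uu_def by (simp add: diff_divide_distrib)
qed

lemma uu_0[simp]: "uu t 0 = 0" by (simp add: uu_def)

context
  fixes m :: nat and t :: real
  assumes m2: "m \<ge> 2" and tdef: "t = pi / real m"
begin

lemma t_pos: "0 < t" using m2 tdef by simp
lemma t_le: "t \<le> pi / 2"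
proof -
  have "pi / real m \<le> pi / 2" using m2 by (intro divide_left_mono) auto
  then show ?thesis using tdef by simp
qed
lemma sin_t_pos: "sin t > 0"
  using t_pos t_le by (intro sin_gt_zero) auto
lemma cos_t_nonneg: "cos t \<ge> 0" using t_pos t_le by (intro cos_ge_zero) auto
lemma cos_t_lt1: "cos t < 1"
proof -
  have "cos t < cos 0" using t_pos t_le by (intro cos_monotone_0_pi) auto
  then show ?thesis by simp
qed
lemma mt: "real m * t = pi" using m2 tdef by simp
lemma cos_t_ge_half: "m \<ge> 3 \<Longrightarrow> cos t \<ge> 1/2"
proof -
  assume "m \<ge> 3"
  then have "pi / real m \<le> pi / 3" by (intro divide_left_mono) auto
  then have "t \<le> pi / 3" using tdef by simp
  then have "cos (pi/3) \<le> cos t" using t_pos by (intro cos_monotone_0_pi_le) auto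
  then show ?thesis by (simp add: cos_60)
qed

lemma uu_1[simp]: "uu t 1 = 1" using sin_t_pos by (simp add: uu_def)
lemma uu_m: "uu t m = 0" using m2 tdef by (simp add: uu_def)
lemma uu_add_m: "uu t (n + m) = - uu t n"
proof -
  have "real (n + m) * t = real n * t + pi" using mt by (simp add: algebra_simps)
  then show ?thesis by (simp add: uu_def)
qed
lemma uu_m1: "uu t (m - 1) = 1"
proof -
  have "real (m - 1) * t = pi - t" using m2 mt by (simp add: of_nat_diff algebra_simps)
  then show ?thesis using sin_t_pos by (simp add: uu_def)
qed
lemma sin_ge: "1 \<le> n \<Longrightarrow> n \<le> m - 1 \<Longrightarrow> sin t \<le> sin (real n * t)"
proof -
  assume n1: "1 \<le> n" and n2: "n \<le> m - 1"
  have nt: "t \<le> real n * t" using n1 t_pos by simp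
  have ntm: "real n * t \<le> pi - t"
  proof -
    have "real n \<le> real m - 1" using n2 m2 by linarith
    then have "real n * t \<le> (real m - 1) * t" using t_pos by (intro mult_right_mono) auto
    also have "\<dots> = pi - t" using mt by (simp add: algebra_simps)
    finally show ?thesis .
  qed
  show ?thesis
  proof (cases "real n * t \<le> pi / 2")
    case True
    have "- (pi/2) \<le> t" using t_pos pi_gt_zero by linarith
    then show ?thesis using nt True by (intro sin_monotone_2pi_le) auto
  next
    case False
    have "sin t \<le> sin (pi - real n * t)" using False ntm t_pos by (intro sin_monotone_2pi_le) auto
    then show ?thesis by simp
  qed
qed
lemma uu_ge1: "1 \<le> n \<Longrightarrow> n \<le> m - 1 \<Longrightarrow> uu t n \<ge> 1"
  using sin_ge sin_t_pos by (simp add: uu_def)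

lemma uu_B: "uu t (Suc p) * uu t (Suc q) + uu t p * uu t q - cos t * (uu t (Suc p) * uu t q + uu t p * uu t (Suc q))
   = cos ((real p - real q) * t)"
proof -
  have "sin (real p * t + t)*sin (real q * t + t) + sin (real p * t) * sin (real q * t)
    - cos t*(sin (real p * t + t)*sin (real q * t) + sin (real p * t)*sin (real q * t + t))
   = (sin t)^2 * cos (real p * t - real q * t)" by (rule trig_id)
  then show ?thesis using sin_t_pos unfolding uu_def
    by (simp add: field_simps power2_eq_square distrib_right)
qed

end

lemma cox_eq_app: "cox_eq V E lab u v \<Longrightarrow> cox_eq V E lab (p @ u @ q) (p @ v @ q)"
proof (induction rule: cox_eq.induct)
  case (refl u) then show ?case by (rule cox_eq.refl)
next
  case (sym u v) then show ?case by (simp add: cox_eq.sym)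
next
  case (trans u v w) then show ?case by (metis cox_eq.trans)
next
  case (inv a u v) then show ?case using cox_eq.inv[where a=a and V=V and u="p@u" and v="v@q" and E=E and lab=lab] by simp
next
  case (braid a b u v) then show ?case using cox_eq.braid[where a=a and b=b and V=V and u="p@u" and v="v@q" and E=E and lab=lab] by simp
qed

lemma cox_eq_appR: "cox_eq V E lab u v \<Longrightarrow> cox_eq V E lab (u @ q) (v @ q)"
  using cox_eq_app[of V E lab u v "[]" q] by simp

lemma cox_eq_appL: "cox_eq V E lab u v \<Longrightarrow> cox_eq V E lab (p @ u) (p @ v)"
  using cox_eq_app[of V E lab u v p "[]"] by simp

lemma cox_eq_cancel: "u \<in> lists V \<Longrightarrow> cox_eq V E lab (u @ rev u) []"
proof (induction u)
  case Nil then show ?case by (simp add: cox_eq.refl)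
next
  case (Cons a u)
  have 1: "cox_eq V E lab ([a] @ (u @ rev u) @ [a]) ([a] @ [] @ [a])"
    using cox_eq_app[of V E lab "u @ rev u" "[]" "[a]" "[a]"] Cons by auto
  have 2: "cox_eq V E lab ([] @ [a,a] @ []) ([] @ [])"
    using Cons by (intro cox_eq.inv) auto
  show ?case using cox_eq.trans[OF 1] 2 by simp
qed

lemma cox_eq_cancel': "u \<in> lists V \<Longrightarrow> cox_eq V E lab (rev u @ u) []"
  using cox_eq_cancel[of "rev u" V E lab] by (simp add: in_lists_conv_set)

lemma cls_eq_iff: "x \<in> lists V \<Longrightarrow> y \<in> lists V \<Longrightarrow> cls V E lab x = cls V E lab y \<longleftrightarrow> cox_eq V E lab x y"
proof
  assume x: "x \<in> lists V" and "cls V E lab x = cls V E lab y"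
  then have "x \<in> cls V E lab y" unfolding cls_def using cox_eq.refl by blast
  then show "cox_eq V E lab x y" unfolding cls_def by (auto intro: cox_eq.sym)
next
  assume "cox_eq V E lab x y"
  then show "cls V E lab x = cls V E lab y" unfolding cls_def
    by (auto intro: cox_eq.trans cox_eq.sym)
qed

lemma alt_Suc_snoc: "alt a b (Suc n) = alt a b n @ [if even n then a else b]"
  by (induction n arbitrary: a b) auto

lemma alt_add: "alt a b (n + k) = alt a b n @ alt (if even n then a else b) (if even n then b else a) k"
  by (induction n arbitrary: a b) auto

lemma set_alt: "set (alt a b n) \<subseteq> {a,b}"
  by (induction n arbitrary: a b) auto

lemma rev_alt: "rev (alt a b n) = (if even n then alt b a n else alt a b n)"
proof (induction n arbitrary: a b)
  case 0 then show ?case by simp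
next
  case (Suc n)
  have "alt b a (Suc n) = alt b a n @ [if even n then b else a]"
       "alt a b (Suc n) = alt a b n @ [if even n then a else b]" by (rule alt_Suc_snoc)+
  then show ?case using Suc[of b a] Suc[of a b] by auto
qed

locale cg =
  fixes V :: "'v set" and E :: "'v \<Rightarrow> 'v \<Rightarrow> bool" and lab :: "'v \<Rightarrow> 'v \<Rightarrow> nat"
  assumes LG: "labelled_graph V E lab"
begin

lemma finV: "finite V" using LG unfolding labelled_graph_def by auto
lemma E_sym: "E a b \<Longrightarrow> E b a" using LG unfolding labelled_graph_def by auto
lemma E_V: "E a b \<Longrightarrow> a \<in> V \<and> b \<in> V" using LG unfolding labelled_graph_def by auto
lemma E_neq: "E a b \<Longrightarrow> a \<noteq> b" using LG unfolding labelled_graph_def by auto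
lemma lab_sym: "E a b \<Longrightarrow> lab b a = lab a b" using LG unfolding labelled_graph_def by metis
lemma lab_ge: "E a b \<Longrightarrow> lab a b \<ge> 2" using LG unfolding labelled_graph_def by auto

definition th :: "'v \<Rightarrow> 'v \<Rightarrow> real" where "th a b = pi / real (lab a b)"
definition cc :: "'v \<Rightarrow> 'v \<Rightarrow> real" where
  "cc x y = (if x = y then 1 else if E x y then - cos (th x y) else -1)"
definition Bf :: "('v \<Rightarrow> real) \<Rightarrow> ('v \<Rightarrow> real) \<Rightarrow> real" where
  "Bf u v = (\<Sum>x\<in>V. \<Sum>y\<in>V. u x * cc x y * v y)"
definition al :: "'v \<Rightarrow> 'v \<Rightarrow> real" where "al s = (\<lambda>x. if x = s then 1 else 0)"
definition rf :: "'v \<Rightarrow> ('v \<Rightarrow> real) \<Rightarrow> ('v \<Rightarrow> real)" where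
  "rf s v = (\<lambda>x. v x - 2 * Bf (al s) v * al s x)"

primrec rho :: "'v list \<Rightarrow> ('v \<Rightarrow> real) \<Rightarrow> ('v \<Rightarrow> real)" where
  "rho [] v = v"
| "rho (s # w) v = rf s (rho w v)"

lemma th_sym: "E a b \<Longrightarrow> th b a = th a b" unfolding th_def using lab_sym by simp

lemma cc_sym: "cc x y = cc y x"
  unfolding cc_def using E_sym th_sym by (auto)

lemma Bf_sym: "Bf u v = Bf v u"
  unfolding Bf_def
  apply (subst sum.swap)
  apply (rule sum.cong[OF HOL.refl])+
  by (metis cc_sym mult.commute mult.assoc)

lemma Bf_lin_l: "Bf (\<lambda>x. a * u x + b * v x) w = a * Bf u w + b * Bf v w"
  unfolding Bf_def
  by (simp add: algebra_simps sum.distrib sum_distrib_left)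

lemma Bf_lin_r: "Bf w (\<lambda>x. a * u x + b * v x) = a * Bf w u + b * Bf w v"
  using Bf_lin_l[of a u b v w] by (simp add: Bf_sym)

lemma Bf_neg_l: "Bf (\<lambda>x. - u x) w = - Bf u w"
  using Bf_lin_l[of "-1" u 0 u w] by simp
lemma Bf_neg_r: "Bf w (\<lambda>x. - u x) = - Bf w u"
  using Bf_neg_l[of u w] by (simp add: Bf_sym)

lemma Bf_al: "s \<in> V \<Longrightarrow> Bf (al s) v = (\<Sum>y\<in>V. cc s y * v y)"
proof -
  assume s: "s \<in> V"
  have "Bf (al s) v = (\<Sum>x\<in>V. if x = s then (\<Sum>y\<in>V. cc s y * v y) else 0)"
    unfolding Bf_def by (rule sum.cong) (auto simp: al_def)
  then show ?thesis using s finV by (simp add: sum.delta)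
qed

lemma Bf_al_al: "s \<in> V \<Longrightarrow> t \<in> V \<Longrightarrow> Bf (al s) (al t) = cc s t"
proof -
  assume s: "s \<in> V" and t: "t \<in> V"
  have "Bf (al s) (al t) = (\<Sum>y\<in>V. if y = t then cc s t else 0)"
    unfolding Bf_al[OF s] by (rule sum.cong) (auto simp: al_def)
  then show ?thesis using t finV by (simp add: sum.delta)
qed

lemma Bf_diff_r: "Bf w (\<lambda>x. u x - c * v x) = Bf w u - c * Bf w v"
  unfolding Bf_def by (simp add: algebra_simps sum_subtractf sum_distrib_left)

lemma Bf_diff_l: "Bf (\<lambda>x. u x - c * v x) w = Bf u w - c * Bf v w"
  using Bf_diff_r[of w u c v] by (simp add: Bf_sym)

lemma cc_self: "cc s s = 1" unfolding cc_def by simp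

lemma rf_lin: "rf s (\<lambda>x. a * u x + b * v x) = (\<lambda>x. a * rf s u x + b * rf s v x)"
  unfolding rf_def by (rule ext) (simp add: Bf_lin_r algebra_simps)

lemma Bf_rf_r: "Bf w (rf s v) = Bf w v - 2 * Bf (al s) v * Bf w (al s)"
  unfolding rf_def using Bf_diff_r[of w v "2 * Bf (al s) v" "al s"] by (simp add: mult.assoc)

lemma Bf_rf_l: "Bf (rf s v) w = Bf v w - 2 * Bf (al s) v * Bf (al s) w"
  using Bf_rf_r[of w s v] by (simp add: Bf_sym)

lemma rf_inv: "s \<in> V \<Longrightarrow> rf s (rf s v) = v"
proof -
  assume s: "s \<in> V"
  have "Bf (al s) (rf s v) = - Bf (al s) v" using s by (simp add: Bf_rf_r Bf_al_al cc_self)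
  then show ?thesis unfolding rf_def[of s "rf s v"] by (rule_tac ext) (simp add: rf_def)
qed

lemma Bf_rf: "s \<in> V \<Longrightarrow> Bf (rf s u) (rf s v) = Bf u v"
proof -
  assume s: "s \<in> V"
  have aa: "Bf (al s) (al s) = 1" using s by (simp add: Bf_al_al cc_self)
  show ?thesis
    by (simp add: Bf_rf_l Bf_rf_r aa Bf_sym[of "al s" u] Bf_sym[of v "al s"] algebra_simps)
qed

lemma rho_append: "rho (u @ w) v = rho u (rho w v)"
  by (induction u) auto

lemma rho_lin: "rho g (\<lambda>x. a * u x + b * v x) = (\<lambda>x. a * rho g u x + b * rho g v x)"
  by (induction g) (auto simp: rf_lin)

lemma rho_neg: "rho g (\<lambda>x. - u x) = (\<lambda>x. - rho g u x)"
  using rho_lin[of g "-1" u 0 u] by simp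

lemma Bf_rho: "g \<in> lists V \<Longrightarrow> Bf (rho g u) (rho g v) = Bf u v"
  by (induction g) (auto simp: Bf_rf)

lemma rf_al_self: "s \<in> V \<Longrightarrow> rf s (al s) = (\<lambda>x. - al s x)"
  unfolding rf_def by (rule ext) (simp add: Bf_al_al cc_self)

lemma rf_al_other: "s \<in> V \<Longrightarrow> t \<in> V \<Longrightarrow> rf s (al t) = (\<lambda>x. al t x - 2 * cc s t * al s x)"
  unfolding rf_def by (rule ext) (simp add: Bf_al_al)

definition lt :: "'v \<Rightarrow> 'v \<Rightarrow> nat \<Rightarrow> 'v" where "lt a b n = (if even n then a else b)"

definition Rk :: "'v \<Rightarrow> 'v \<Rightarrow> nat \<Rightarrow> 'v \<Rightarrow> real" where
  "Rk a b k = (\<lambda>x. uu (th a b) (Suc k) * al a x + uu (th a b) k * al b x)"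

lemma cc_E: "E a b \<Longrightarrow> cc a b = - cos (th a b)"
  unfolding cc_def using E_neq by auto

lemma th_props: "E a b \<Longrightarrow> lab a b \<ge> 2 \<and> th a b = pi / real (lab a b)"
  using lab_ge th_def by auto

lemma R_formula: "E a b \<Longrightarrow> rho (alt a b k) (al (lt a b k)) = Rk a b k"
proof (induction k arbitrary: a b)
  case 0
  have "uu (th a b) 1 = 1" using th_props[OF 0] uu_1 by blast
  then show ?case by (simp add: Rk_def lt_def)
next
  case (Suc k)
  have Eba: "E b a" using Suc.prems E_sym by blast
  have ab: "a \<in> V" "b \<in> V" using E_V Suc.prems by auto
  have ltS: "lt a b (Suc k) = lt b a k" unfolding lt_def by simp
  have IH: "rho (alt b a k) (al (lt b a k)) = Rk b a k" using Suc.IH Eba by blast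
  have thba: "th b a = th a b" using th_sym Suc.prems by blast
  let ?t = "th a b"
  have rec: "uu ?t (Suc (Suc k)) = 2 * cos ?t * uu ?t (Suc k) - uu ?t k" by (rule uu_rec)
  have "rho (alt a b (Suc k)) (al (lt a b (Suc k))) = rf a (Rk b a k)"
    using IH ltS by simp
  also have "\<dots> = Rk a b (Suc k)"
    unfolding Rk_def thba rf_lin rf_al_self[OF ab(1)] rf_al_other[OF ab(1) ab(2)] cc_E[OF Suc.prems] rec
    by (rule ext) (simp add: algebra_simps)
  finally show ?case .
qed

lemma rho_fix: "w \<in> lists {a,b} \<Longrightarrow> Bf (al a) v = 0 \<Longrightarrow> Bf (al b) v = 0 \<Longrightarrow> rho w v = v"
proof (induction w)
  case Nil then show ?case by simp
next
  case (Cons x w)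
  then have "rho w v = v" by simp
  moreover have "Bf (al x) v = 0" using Cons by auto
  ultimately show ?case by (simp add: rf_def)
qed

lemma rho_lin3: "rho g (\<lambda>x. u x + p * v x + q * w x) = (\<lambda>x. rho g u x + p * rho g v x + q * rho g w x)"
proof -
  have "rho g (\<lambda>x. u x + p * v x + q * w x) = rho g (\<lambda>x. 1 * (\<lambda>x. 1 * u x + p * v x) x + q * w x)"
    by simp
  also have "\<dots> = (\<lambda>x. rho g u x + p * rho g v x + q * rho g w x)"
    unfolding rho_lin by simp
  finally show ?thesis .
qed

lemma rho_eq_2d:
  assumes Eab: "E a b" and w1: "w1 \<in> lists {a,b}" and w2: "w2 \<in> lists {a,b}"
    and ea: "rho w1 (al a) = rho w2 (al a)" and eb: "rho w1 (al b) = rho w2 (al b)"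
  shows "rho w1 = rho w2"
proof
  fix v
  have ab: "a \<in> V" "b \<in> V" using E_V Eab by auto
  define c where "c = cos (th a b)"
  have tp: "lab a b \<ge> 2" "th a b = pi / real (lab a b)" using th_props[OF Eab] by auto
  have c1: "c < 1" "c \<ge> 0" unfolding c_def using cos_t_lt1[OF tp] cos_t_nonneg[OF tp] by auto
  have "c * c \<le> c * 1" using c1 by (intro mult_left_mono) auto
  then have d: "1 - c * c > 0" using c1 by linarith
  have cab: "cc a b = - c" "cc b a = - c" using cc_E[OF Eab] cc_sym c_def by auto
  define x where "x = Bf (al a) v"
  define y where "y = Bf (al b) v"
  define p where "p = (x + c * y) / (1 - c * c)"
  define q where "q = (y + c * x) / (1 - c * c)"
  define v0 where "v0 = (\<lambda>z. v z - p * al a z - q * al b z)"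
  have "Bf (al a) v0 = x - p * cc a a - q * cc a b"
    unfolding v0_def x_def using Bf_diff_r Bf_al_al ab by (simp add: Bf_diff_r Bf_al_al)
  also have "\<dots> = 0" using d unfolding p_def q_def cab cc_self by (simp add: field_simps)
  finally have 0: "Bf (al a) v0 = 0" .
  have "Bf (al b) v0 = y - p * cc b a - q * cc b b"
    unfolding v0_def y_def using Bf_diff_r Bf_al_al ab by (simp add: Bf_diff_r Bf_al_al)
  also have "\<dots> = 0" using d unfolding p_def q_def cab cc_self by (simp add: field_simps)
  finally have 1: "Bf (al b) v0 = 0" .
  have vv: "v = (\<lambda>z. v0 z + p * al a z + q * al b z)" unfolding v0_def by simp
  have "rho w1 v = (\<lambda>z. v0 z + p * rho w1 (al a) z + q * rho w1 (al b) z)"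
  proof -
    have "rho w1 v = rho w1 (\<lambda>z. v0 z + p * al a z + q * al b z)" using vv by (rule arg_cong)
    also have "\<dots> = (\<lambda>z. rho w1 v0 z + p * rho w1 (al a) z + q * rho w1 (al b) z)" by (rule rho_lin3)
    finally show ?thesis unfolding rho_fix[OF w1 0 1] .
  qed
  moreover have "rho w2 v = (\<lambda>z. v0 z + p * rho w2 (al a) z + q * rho w2 (al b) z)"
  proof -
    have "rho w2 v = rho w2 (\<lambda>z. v0 z + p * al a z + q * al b z)" using vv by (rule arg_cong)
    also have "\<dots> = (\<lambda>z. rho w2 v0 z + p * rho w2 (al a) z + q * rho w2 (al b) z)" by (rule rho_lin3)
    finally show ?thesis unfolding rho_fix[OF w2 0 1] .
  qed
  ultimately show "rho w1 v = rho w2 v" using ea eb by simp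
qed

lemma alt_lists: "alt a b n \<in> lists {a,b}"
  using set_alt[of a b n] by auto

lemma braid_rho:
  assumes Eab: "E a b"
  shows "rho (alt a b (lab a b)) = rho (alt b a (lab a b))"
proof -
  define m where "m = lab a b"
  have m2: "m \<ge> 2" and tt: "th a b = pi / real m" using th_props[OF Eab] m_def by auto
  have Eba: "E b a" using E_sym Eab by blast
  have thba: "th b a = th a b" using th_sym Eab by blast
  have ab: "a \<in> V" "b \<in> V" using E_V Eab by auto
  have um: "uu (th a b) m = 0" using uu_m[OF m2 tt] .
  have um1: "uu (th a b) (Suc m) = -1" using uu_add_m[OF m2 tt, of 1] uu_1[OF m2 tt] by simp
  have umm: "uu (th a b) (m - 1) = 1" using uu_m1[OF m2 tt] .
  have mS: "Suc (m - 1) = m" using m2 by simp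
  have mS': "Suc (m - Suc 0) = m" using m2 by simp
  have umm': "uu (th a b) (m - Suc 0) = 1" using umm by simp
  have split1: "alt a b m = alt a b (m - 1) @ [lt a b (m - 1)]"
    using alt_Suc_snoc[of a b "m - 1"] mS by (simp add: lt_def)
  have split2: "alt b a m = alt b a (m - 1) @ [lt b a (m - 1)]"
    using alt_Suc_snoc[of b a "m - 1"] mS by (simp add: lt_def)
  have l1: "lt b a (m - 1) = lt a b m" "lt a b (m - 1) = lt b a m"
    unfolding lt_def using even_Suc[of "m - 1"] mS by auto
  have lv: "lt a b n \<in> V" "lt b a n \<in> V" for n using ab by (auto simp: lt_def)
  have A1: "rho (alt a b m) (al (lt a b m)) = (\<lambda>x. - al a x)"
    using R_formula[OF Eab, of m] um um1 by (simp add: Rk_def)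
  have A2: "rho (alt a b m) (al (lt b a m)) = (\<lambda>x. - al b x)"
  proof -
    have "rho (alt a b m) (al (lt b a m)) = rho (alt a b (m - 1)) (rf (lt a b (m - 1)) (al (lt a b (m - 1))))"
      using split1 l1 by (simp add: rho_append)
    also have "\<dots> = rho (alt a b (m - 1)) (\<lambda>x. - al (lt a b (m - 1)) x)" using rf_al_self lv by simp
    also have "\<dots> = (\<lambda>x. - Rk a b (m - 1) x)" using R_formula[OF Eab] rho_neg by simp
    also have "\<dots> = (\<lambda>x. - al b x)" unfolding Rk_def by (simp add: mS' um umm')
    finally show ?thesis .
  qed
  have B1: "rho (alt b a m) (al (lt b a m)) = (\<lambda>x. - al b x)"
    using R_formula[OF Eba, of m] um um1 thba by (simp add: Rk_def)
  have B2: "rho (alt b a m) (al (lt a b m)) = (\<lambda>x. - al a x)"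
  proof -
    have "rho (alt b a m) (al (lt a b m)) = rho (alt b a (m - 1)) (rf (lt b a (m - 1)) (al (lt b a (m - 1))))"
      using split2 l1 by (simp add: rho_append)
    also have "\<dots> = rho (alt b a (m - 1)) (\<lambda>x. - al (lt b a (m - 1)) x)" using rf_al_self lv by simp
    also have "\<dots> = (\<lambda>x. - Rk b a (m - 1) x)" using R_formula[OF Eba] rho_neg by simp
    also have "\<dots> = (\<lambda>x. - al a x)" unfolding Rk_def thba by (simp add: mS' um umm')
    finally show ?thesis .
  qed
  have "rho (alt a b m) = rho (alt b a m)"
  proof (rule rho_eq_2d[OF Eab alt_lists])
    show "alt b a m \<in> lists {a, b}" using alt_lists[of b a m] by (simp add: insert_commute)
    have "lt a b m = a \<and> lt b a m = b \<or> lt a b m = b \<and> lt b a m = a" unfolding lt_def by auto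
    then show "rho (alt a b m) (al a) = rho (alt b a m) (al a)" "rho (alt a b m) (al b) = rho (alt b a m) (al b)"
      using A1 A2 B1 B2 by auto
  qed
  then show ?thesis using m_def by simp
qed

lemma rho_cox: "cox_eq V E lab u v \<Longrightarrow> rho u = rho v"
proof (induction rule: cox_eq.induct)
  case (inv a u v)
  show ?case by (rule ext) (simp add: rho_append rf_inv inv)
next
  case (braid a b u v)
  show ?case by (rule ext) (simp add: rho_append braid_rho[OF braid])
qed auto

end


context cg
begin

lemma rho_inv1: "g \<in> lists V \<Longrightarrow> rho g (rho (rev g) v) = v"
proof -
  assume g: "g \<in> lists V"
  have "rho (g @ rev g) v = rho [] v" using rho_cox[OF cox_eq_cancel[OF g, of E lab]] by simp
  then show ?thesis by (simp add: rho_append)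
qed

lemma rho_inv2: "g \<in> lists V \<Longrightarrow> rho (rev g) (rho g v) = v"
proof -
  assume g: "g \<in> lists V"
  have "rho (rev g @ g) v = rho [] v" using rho_cox[OF cox_eq_cancel'[OF g, of E lab]] by simp
  then show ?thesis by (simp add: rho_append)
qed

lemma rho_inj: "g \<in> lists V \<Longrightarrow> rho g u = rho g v \<Longrightarrow> u = v"
proof -
  assume "g \<in> lists V" "rho g u = rho g v"
  then have "rho (rev g) (rho g u) = rho (rev g) (rho g v)" by simp
  then show "u = v" using rho_inv2[of g u] rho_inv2[of g v] \<open>g \<in> lists V\<close> by argo
qed

lemma rf_eq_imp: "s \<in> V \<Longrightarrow> t \<in> V \<Longrightarrow> rf s = rf t \<Longrightarrow> s = t"
proof (rule ccontr)
  assume s: "s \<in> V" and t: "t \<in> V" and eq: "rf s = rf t" and ne: "s \<noteq> t"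
  have "rf s (al t) t = 1" using ne by (simp add: rf_def al_def)
  moreover have "rf t (al t) t = -1" unfolding rf_al_self[OF t] by (simp add: al_def)
  ultimately show False using eq by simp
qed

lemma edge_label:
  assumes g: "g \<in> lists V" and h: "h \<in> lists V" and s: "s \<in> V" and t: "t \<in> V"
    and eq: "{cls V E lab g, cls V E lab (g @ [s])} = {cls V E lab h, cls V E lab (h @ [t])}"
  shows "s = t \<and> (cox_eq V E lab g h \<or> cox_eq V E lab g (h @ [t]))"
proof -
  have gs: "g @ [s] \<in> lists V" and ht: "h @ [t] \<in> lists V" using g h s t by auto
  from eq have "(cls V E lab g = cls V E lab h \<and> cls V E lab (g @ [s]) = cls V E lab (h @ [t])) \<or>
     (cls V E lab g = cls V E lab (h @ [t]) \<and> cls V E lab (g @ [s]) = cls V E lab h)"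
    by (auto simp: doubleton_eq_iff)
  then show ?thesis
  proof
    assume a: "cls V E lab g = cls V E lab h \<and> cls V E lab (g @ [s]) = cls V E lab (h @ [t])"
    then have c1: "cox_eq V E lab g h" and c2: "cox_eq V E lab (g @ [s]) (h @ [t])"
      using cls_eq_iff[OF g h] cls_eq_iff[OF gs ht] by auto
    have r1: "rho g = rho h" using rho_cox[OF c1] .
    have r2: "rho (g @ [s]) = rho (h @ [t])" using rho_cox[OF c2] .
    have "rf s = rf t"
    proof
      fix v
      have "rho (g @ [s]) v = rho (h @ [t]) v" using r2 by simp
      then have "rho g (rf s v) = rho g (rf t v)" using r1 by (simp add: rho_append)
      then show "rf s v = rf t v" using rho_inj g by blast
    qed
    then show ?thesis using rf_eq_imp s t c1 by blast
  next
    assume a: "cls V E lab g = cls V E lab (h @ [t]) \<and> cls V E lab (g @ [s]) = cls V E lab h"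
    then have c1: "cox_eq V E lab g (h @ [t])" and c2: "cox_eq V E lab (g @ [s]) h"
      using cls_eq_iff[OF g ht] cls_eq_iff[OF gs h] by auto
    have r1: "rho g = rho (h @ [t])" using rho_cox[OF c1] .
    have r2: "rho (g @ [s]) = rho h" using rho_cox[OF c2] .
    have "rf s = rf t"
    proof
      fix v
      have "rho (g @ [s]) v = rho h v" using r2 by simp
      then have "rho h (rf t (rf s v)) = rho h v" using r1 by (simp add: rho_append)
      then have "rf t (rf s v) = v" using rho_inj h by blast
      then have "rf t (rf t (rf s v)) = rf t v" by simp
      then show "rf s v = rf t v" using rf_inv t by simp
    qed
    then show ?thesis using rf_eq_imp s t c1 by blast
  qed
qed

definition rootset :: "'v list set set \<Rightarrow> ('v \<Rightarrow> real) set" where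
  "rootset e = {rho g (al t) | g t. g \<in> lists V \<and> t \<in> V \<and> e = {cls V E lab g, cls V E lab (g @ [t])}}"

definition pm :: "('v \<Rightarrow> real) \<Rightarrow> ('v \<Rightarrow> real) \<Rightarrow> bool" where
  "pm b c \<longleftrightarrow> c = b \<or> c = (\<lambda>x. - b x)"

lemma pm_refl: "pm b b" by (simp add: pm_def)
lemma pm_sym: "pm b c \<Longrightarrow> pm c b" by (auto simp: pm_def)
lemma pm_trans: "pm b c \<Longrightarrow> pm c d \<Longrightarrow> pm b d" by (auto simp: pm_def)
lemma pm_rho: "pm b c \<Longrightarrow> pm (rho g b) (rho g c)" by (auto simp: pm_def rho_neg)
lemma pm_Bf: "pm b b' \<Longrightarrow> pm c c' \<Longrightarrow> \<bar>Bf b' c'\<bar> = \<bar>Bf b c\<bar>"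
  by (auto simp: pm_def Bf_neg_l Bf_neg_r)

lemma rootset_pm: "b \<in> rootset e \<Longrightarrow> c \<in> rootset e \<Longrightarrow> pm b c"
proof -
  assume "b \<in> rootset e" "c \<in> rootset e"
  then obtain g s h t where g: "g \<in> lists V" and s: "s \<in> V" and eb: "e = {cls V E lab g, cls V E lab (g @ [s])}"
    and b: "b = rho g (al s)" and h: "h \<in> lists V" and t: "t \<in> V" and ec: "e = {cls V E lab h, cls V E lab (h @ [t])}"
    and c: "c = rho h (al t)"
    unfolding rootset_def mem_Collect_eq by metis
  have L: "s = t \<and> (cox_eq V E lab g h \<or> cox_eq V E lab g (h @ [t]))"
    using edge_label[OF g h s t] eb ec by simp
  show "pm b c"
  proof (cases "cox_eq V E lab g h")
    case True
    then have "rho g = rho h" by (rule rho_cox)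
    then show ?thesis using L b c by (simp add: pm_def)
  next
    case False
    then have "cox_eq V E lab g (h @ [t])" using L by blast
    then have "rho g = rho (h @ [t])" by (rule rho_cox)
    then have "b = rho h (\<lambda>x. - al t x)" using b L t by (simp add: rho_append rf_al_self)
    then show ?thesis using c by (simp add: pm_def rho_neg)
  qed
qed

lemma lt_in: "lt a b n \<in> {a,b}" by (simp add: lt_def)
lemma alt_Suc_lt: "alt a b (Suc n) = alt a b n @ [lt a b n]"
  using alt_Suc_snoc[of a b n] by (simp add: lt_def)

lemma cox_braid0: "E a b \<Longrightarrow> cox_eq V E lab (alt a b (lab a b)) (alt b a (lab a b))"
  using cox_eq.braid[where u="[]" and v="[]" and a=a and b=b and V=V and E=E and lab=lab] by simp

lemma lists_ab: "a \<in> V \<Longrightarrow> b \<in> V \<Longrightarrow> x \<in> lists {a,b} \<Longrightarrow> x \<in> lists V"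
  by auto

lemma alt_listsV: "E a b \<Longrightarrow> alt a b n \<in> lists V"
  using alt_lists[of a b n] E_V[of a b] by auto

lemma alt2m: "E a b \<Longrightarrow> cox_eq V E lab (alt a b (2 * lab a b)) []"
proof -
  assume Eab: "E a b"
  define m where "m = lab a b"
  have 1: "alt a b (2 * m) = alt a b m @ alt (lt a b m) (lt b a m) m"
    using alt_add[of a b m m] by (simp add: lt_def mult_2)
  have 2: "alt (lt a b m) (lt b a m) m = rev (alt b a m)"
    using rev_alt[of b a m] by (simp add: lt_def)
  have 3: "cox_eq V E lab (alt a b m @ rev (alt b a m)) (alt b a m @ rev (alt b a m))"
    using cox_eq_appR[OF cox_braid0[OF Eab]] m_def by simp
  have 4: "cox_eq V E lab (alt b a m @ rev (alt b a m)) []"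
    using cox_eq_cancel[OF alt_listsV[OF E_sym[OF Eab]]] .
  show ?thesis using cox_eq.trans[OF 3 4] 1 2 m_def by simp
qed

lemma step_core:
  assumes Eab: "E a b" and k: "k < 2 * lab a b" and t: "t \<in> {a,b}"
  shows "\<exists>j<2 * lab a b. (cox_eq V E lab (alt a b k) (alt a b j) \<and> cox_eq V E lab (alt a b k @ [t]) (alt a b (Suc j)))
     \<or> (cox_eq V E lab (alt a b k) (alt a b (Suc j)) \<and> cox_eq V E lab (alt a b k @ [t]) (alt a b j))"
proof -
  define m where "m = lab a b"
  have m2: "m \<ge> 2" using lab_ge Eab m_def by auto
  have ab: "a \<noteq> b" "a \<in> V" "b \<in> V" using E_neq E_V Eab by auto
  show ?thesis
  proof (cases "t = lt a b k")
    case True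
    have r1: "cox_eq V E lab (alt a b k) (alt a b k)" by (rule cox_eq.refl)
    have r2: "cox_eq V E lab (alt a b k @ [t]) (alt a b (Suc k))"
      unfolding alt_Suc_lt True by (rule cox_eq.refl)
    show ?thesis using k r1 r2 by blast
  next
    case False
    show ?thesis
    proof (cases k)
      case 0
      then have tb: "t = b" using False t by (auto simp: lt_def)
      define N where "N = 2 * m - 1"
      have SN: "Suc N = 2 * m" using m2 N_def by simp
      have "odd N" using SN by presburger
      then have ltN: "lt a b N = b" unfolding lt_def by simp
      have c1: "cox_eq V E lab (alt a b N @ [b, b]) (alt a b N)"
        using cox_eq.inv[where u="alt a b N" and v="[]" and a=b and V=V and E=E and lab=lab] ab by simp
      have c2: "alt a b N @ [b, b] = alt a b (Suc N) @ [b]" using alt_Suc_lt[of a b N] ltN by simp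
      have c3: "cox_eq V E lab (alt a b (Suc N) @ [b]) ([] @ [b])"
        using cox_eq_appR[OF alt2m[OF Eab]] SN m_def by simp
      have c3'': "cox_eq V E lab [b] (alt a b (Suc N) @ [b])" using cox_eq.sym[OF c3] by simp
      have c3': "cox_eq V E lab [b] (alt a b N @ [b, b])" unfolding c2 by (rule c3'')
      have c4: "cox_eq V E lab [b] (alt a b N)" using cox_eq.trans[OF c3' c1] .
      have c5: "cox_eq V E lab (alt a b k) (alt a b (Suc N))"
        using alt2m[OF Eab] SN m_def 0 by (simp add: cox_eq.sym)
      have "N < 2 * lab a b" using SN m_def by simp
      then show ?thesis using c4 c5 0 tb by auto
    next
      case (Suc j)
      have ltj: "lt a b j \<noteq> lt a b k" unfolding lt_def using Suc ab by auto
      then have tj: "t = lt a b j" using False t lt_in[of a b j] lt_in[of a b k] by auto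
      have "alt a b k @ [t] = alt a b j @ [t, t]" using alt_Suc_lt[of a b j] Suc tj by simp
      moreover have "cox_eq V E lab (alt a b j @ [t, t]) (alt a b j)"
        using cox_eq.inv[where u="alt a b j" and v="[]" and a=t and V=V and E=E and lab=lab] t ab by auto
      ultimately have "cox_eq V E lab (alt a b k @ [t]) (alt a b j)" by simp
      moreover have "j < 2 * lab a b" using Suc k by simp
      ultimately show ?thesis using Suc cox_eq.refl[of V E lab "alt a b k"] by blast
    qed
  qed
qed

lemma dihedral_nf: "E a b \<Longrightarrow> x \<in> lists {a,b} \<Longrightarrow> \<exists>k<2 * lab a b. cox_eq V E lab x (alt a b k)"
proof (induction x rule: rev_induct)
  case Nil
  have "0 < 2 * lab a b" using lab_ge Nil by fastforce
  then show ?case using cox_eq.refl[of V E lab "[]"] by (intro exI[of _ 0]) auto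
next
  case (snoc t x)
  then obtain k where k: "k < 2 * lab a b" and c: "cox_eq V E lab x (alt a b k)" by auto
  have t: "t \<in> {a,b}" using snoc.prems by auto
  have c0: "cox_eq V E lab (x @ [t]) (alt a b k @ [t])" using cox_eq_appR[OF c] .
  obtain j where j: "j < 2 * lab a b" and
    d: "cox_eq V E lab (alt a b k @ [t]) (alt a b (Suc j)) \<or> cox_eq V E lab (alt a b k @ [t]) (alt a b j)"
    using step_core[OF snoc.prems(1) k t] by blast
  show ?case
  proof (cases "cox_eq V E lab (alt a b k @ [t]) (alt a b j)")
    case True
    have "cox_eq V E lab (x @ [t]) (alt a b j)" using cox_eq.trans[OF c0 True] .
    then show ?thesis using j by blast
  next
    case False
    then have "cox_eq V E lab (alt a b k @ [t]) (alt a b (Suc j))" using d by blast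
    then have d1: "cox_eq V E lab (x @ [t]) (alt a b (Suc j))" using cox_eq.trans[OF c0] by blast
    show ?thesis
    proof (cases "Suc j < 2 * lab a b")
      case True
      then show ?thesis using d1 by blast
    next
      case False
      then have "Suc j = 2 * lab a b" using j by simp
      then have "cox_eq V E lab (alt a b (Suc j)) (alt a b 0)" using alt2m[OF snoc.prems(1)] by simp
      then have "cox_eq V E lab (x @ [t]) (alt a b 0)" using cox_eq.trans[OF d1] by blast
      moreover have "0 < 2 * lab a b" using j by simp
      ultimately show ?thesis by blast
    qed
  qed
qed

lemma cls_cong: "x \<in> lists V \<Longrightarrow> y \<in> lists V \<Longrightarrow> cox_eq V E lab x y \<Longrightarrow> cls V E lab x = cls V E lab y"
  by (simp add: cls_eq_iff)

lemma edge_nf: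
  assumes W: "W \<in> lists V" and Eab: "E a b" and x: "x \<in> lists {a,b}" and t: "t \<in> {a,b}"
  shows "\<exists>j<2 * lab a b. {cls V E lab (W @ x), cls V E lab (W @ x @ [t])} = cedge V E lab W a b j"
proof -
  have ab: "a \<in> V" "b \<in> V" using E_V Eab by auto
  have LV: "\<And>z. z \<in> lists {a,b} \<Longrightarrow> W @ z \<in> lists V" using W ab by auto
  have LA: "\<And>n. alt a b n \<in> lists {a,b}" by (rule alt_lists)
  obtain k where k: "k < 2 * lab a b" and c: "cox_eq V E lab x (alt a b k)" using dihedral_nf[OF Eab x] by blast
  have xt: "x @ [t] \<in> lists {a,b}" and kt: "alt a b k @ [t] \<in> lists {a,b}" using x t LA by auto
  have e1: "cls V E lab (W @ x) = cls V E lab (W @ alt a b k)"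
    by (rule cls_cong[OF LV[OF x] LV[OF LA] cox_eq_appL[OF c]])
  have e2: "cls V E lab (W @ x @ [t]) = cls V E lab (W @ alt a b k @ [t])"
    by (rule cls_cong[OF LV[OF xt] LV[OF kt] cox_eq_appL[OF cox_eq_appR[OF c]]])
  obtain j where j: "j < 2 * lab a b" and
    d: "(cox_eq V E lab (alt a b k) (alt a b j) \<and> cox_eq V E lab (alt a b k @ [t]) (alt a b (Suc j)))
     \<or> (cox_eq V E lab (alt a b k) (alt a b (Suc j)) \<and> cox_eq V E lab (alt a b k @ [t]) (alt a b j))"
    using step_core[OF Eab k t] by blast
  have L2: "alt a b k @ [t] \<in> lists {a,b}" using LA t by auto
  have cc1: "cox_eq V E lab u v \<Longrightarrow> u \<in> lists {a,b} \<Longrightarrow> v \<in> lists {a,b} \<Longrightarrow> cls V E lab (W @ u) = cls V E lab (W @ v)" for u v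
  proof -
    assume h: "cox_eq V E lab u v" "u \<in> lists {a,b}" "v \<in> lists {a,b}"
    show ?thesis by (rule cls_cong[OF LV[OF h(2)] LV[OF h(3)] cox_eq_appL[OF h(1)]])
  qed
  have "{cls V E lab (W @ alt a b k), cls V E lab (W @ alt a b k @ [t])} =
      {cls V E lab (W @ alt a b j), cls V E lab (W @ alt a b (Suc j))}"
  proof (cases "cox_eq V E lab (alt a b k) (alt a b j) \<and> cox_eq V E lab (alt a b k @ [t]) (alt a b (Suc j))")
    case True
    have "cls V E lab (W @ alt a b k) = cls V E lab (W @ alt a b j)" using cc1[OF conjunct1[OF True] LA LA] .
    moreover have "cls V E lab (W @ alt a b k @ [t]) = cls V E lab (W @ alt a b (Suc j))" using cc1[OF conjunct2[OF True] L2 LA] by simp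
    ultimately show ?thesis by simp
  next
    case False
    then have h: "cox_eq V E lab (alt a b k) (alt a b (Suc j)) \<and> cox_eq V E lab (alt a b k @ [t]) (alt a b j)" using d by blast
    have "cls V E lab (W @ alt a b k) = cls V E lab (W @ alt a b (Suc j))" using cc1[OF conjunct1[OF h] LA LA] .
    moreover have "cls V E lab (W @ alt a b k @ [t]) = cls V E lab (W @ alt a b j)" using cc1[OF conjunct2[OF h] L2 LA] by simp
    ultimately show ?thesis by (simp add: insert_commute)
  qed
  then have "{cls V E lab (W @ x), cls V E lab (W @ x @ [t])} = cedge V E lab W a b j"
    unfolding e1 e2 cedge_def .
  then show ?thesis using j by blast
qed

lemma cell_rebase:
  assumes w: "w \<in> lists V" and W: "W \<in> lists V" and ab: "a \<in> V" "b \<in> V" and u: "u \<in> lists {a,b}"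
    and c: "cox_eq V E lab (w @ u) W" and sc: "{a,b} = {s,c}"
  shows "cell_of V E lab w a b = cell_of V E lab W s c"
proof -
  have uV: "u \<in> lists V" using u ab by auto
  have "{cls V E lab (w @ x) | x. x \<in> lists {a, b}} = {cls V E lab (W @ y) | y. y \<in> lists {s, c}}"
  proof (intro set_eqI iffI)
    fix z assume "z \<in> {cls V E lab (w @ x) | x. x \<in> lists {a, b}}"
    then obtain x where x: "x \<in> lists {a,b}" and z: "z = cls V E lab (w @ x)" by blast
    have xV: "x \<in> lists V" using x ab by auto
    have "cox_eq V E lab (w @ x) (w @ (u @ rev u) @ x)"
      using cox_eq_app[OF cox_eq.sym[OF cox_eq_cancel[OF uV]], where p=w and q=x] by simp
    moreover have "cox_eq V E lab (w @ (u @ rev u) @ x) (W @ rev u @ x)"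
      using cox_eq_appR[OF c, where q="rev u @ x"] by simp
    ultimately have cq: "cox_eq V E lab (w @ x) (W @ (rev u @ x))" by (rule cox_eq.trans)
    have l1: "w @ x \<in> lists V" "W @ (rev u @ x) \<in> lists V" using w W xV uV by auto
    have "z = cls V E lab (W @ (rev u @ x))" using z cls_cong[OF l1 cq] by simp
    moreover have "rev u @ x \<in> lists {s, c}" using u x sc by auto
    ultimately show "z \<in> {cls V E lab (W @ y) | y. y \<in> lists {s, c}}" by blast
  next
    fix z assume "z \<in> {cls V E lab (W @ y) | y. y \<in> lists {s, c}}"
    then obtain y where y: "y \<in> lists {s,c}" and z: "z = cls V E lab (W @ y)" by blast
    have yV: "y \<in> lists V" using y sc ab by auto
    have cq: "cox_eq V E lab (w @ (u @ y)) (W @ y)" using cox_eq_appR[OF c, where q=y] by simp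
    have l1: "w @ (u @ y) \<in> lists V" "W @ y \<in> lists V" using w W yV uV by auto
    have "z = cls V E lab (w @ (u @ y))" using z cls_cong[OF l1 cq] by simp
    moreover have "u @ y \<in> lists {a, b}" using u y sc by auto
    ultimately show "z \<in> {cls V E lab (w @ x) | x. x \<in> lists {a, b}}" by blast
  qed
  then show ?thesis unfolding cell_of_def using sc by simp
qed

lemma cell_edges_nf:
  assumes W: "W \<in> lists V" and Esa: "E s a" and e: "e \<in> cell_edges V E lab (cell_of V E lab W s a)"
  shows "\<exists>j<2 * lab s a. e = cedge V E lab W s a j"
proof -
  obtain w1 a1 b1 k1 where w1: "w1 \<in> lists V" and E1: "E a1 b1"
    and eqc: "cell_of V E lab w1 a1 b1 = cell_of V E lab W s a" and k1: "k1 < 2 * lab a1 b1"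
    and e1: "e = cedge V E lab w1 a1 b1 k1"
    using e unfolding cell_edges_def by blast
  have sa: "s \<in> V" "a \<in> V" using E_V Esa by auto
  have a1b1: "{a1, b1} = {s, a}" using eqc unfolding cell_of_def by simp
  have "cls V E lab (w1 @ []) \<in> snd (cell_of V E lab w1 a1 b1)" unfolding cell_of_def by (auto intro!: exI[of _ "[]"])
  then have "cls V E lab w1 \<in> {cls V E lab (W @ u) | u. u \<in> lists {s, a}}" using eqc unfolding cell_of_def by simp
  then obtain u0 where u0: "u0 \<in> lists {s,a}" and cu: "cls V E lab w1 = cls V E lab (W @ u0)" by blast
  have WuV: "W @ u0 \<in> lists V" using W u0 sa by auto
  have cw: "cox_eq V E lab w1 (W @ u0)" using cls_eq_iff[OF w1 WuV] cu by simp
  define x where "x = u0 @ alt a1 b1 k1"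
  have x: "x \<in> lists {s,a}" unfolding x_def using u0 alt_lists[of a1 b1 k1] a1b1 by auto
  have t: "lt a1 b1 k1 \<in> {s,a}" using lt_in[of a1 b1 k1] a1b1 by auto
  have xV: "x \<in> lists V" using x sa by auto
  have altV: "alt a1 b1 n \<in> lists V" for n using alt_listsV[OF E1] .
  have ltV: "lt a1 b1 k1 \<in> V" using t sa by auto
  have cq1: "cox_eq V E lab (w1 @ alt a1 b1 k1) (W @ x)"
    using cox_eq_appR[OF cw, where q="alt a1 b1 k1"] unfolding x_def by simp
  have cq2: "cox_eq V E lab (w1 @ alt a1 b1 k1 @ [lt a1 b1 k1]) (W @ x @ [lt a1 b1 k1])"
    using cox_eq_appR[OF cw, where q="alt a1 b1 k1 @ [lt a1 b1 k1]"] unfolding x_def by simp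
  have l1: "w1 @ alt a1 b1 k1 \<in> lists V" "W @ x \<in> lists V" using w1 altV W xV by auto
  have l2: "w1 @ alt a1 b1 k1 @ [lt a1 b1 k1] \<in> lists V" "W @ x @ [lt a1 b1 k1] \<in> lists V"
    using w1 altV W xV ltV by auto
  have q1: "cls V E lab (w1 @ alt a1 b1 k1) = cls V E lab (W @ x)" by (rule cls_cong[OF l1 cq1])
  have q2: "cls V E lab (w1 @ alt a1 b1 (Suc k1)) = cls V E lab (W @ x @ [lt a1 b1 k1])"
    unfolding alt_Suc_lt append_assoc by (rule cls_cong[OF l2 cq2])
  have "e = {cls V E lab (W @ x), cls V E lab (W @ x @ [lt a1 b1 k1])}"
    using e1 q1 q2 unfolding cedge_def by simp
  then show ?thesis using edge_nf[OF W Esa x t] by simp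
qed

end

lemma cos_pm1:
  fixes m p q :: nat and t :: real
  assumes m2: "m \<ge> 2" and tdef: "t = pi / real m" and p: "p < 2 * m" and q: "q < 2 * m"
    and c: "\<bar>cos ((real p - real q) * t)\<bar> \<ge> 1"
  shows "q = p \<or> q = (p + m) mod (2 * m)"
proof -
  define z where "z = (real p - real q) * t"
  have le: "\<bar>cos z\<bar> \<le> 1" by (rule abs_cos_le_one)
  have "\<bar>cos z\<bar> = 1" using le c unfolding z_def by linarith
  then have "(cos z)^2 = 1" by (metis abs_power2 power2_abs power_one)
  then have "(sin z)^2 = 0" using sin_cos_squared_add[of z] by simp
  then have "sin z = 0" by simp
  then obtain n :: int where n: "z = of_int n * pi" using sin_zero_iff_int2 by blast
  have mpos: "real m > 0" using m2 by simp
  have "(real p - real q) * pi = of_int n * pi * real m" using n mpos unfolding z_def tdef by (simp add: field_simps)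
  then have "real p - real q = of_int n * real m" by simp
  then have e: "int p - int q = n * int m" by (metis of_int_eq_iff of_int_diff of_int_mult of_int_of_nat_eq)
  have mp: "int m > 0" using m2 by simp
  have "n * int m < 2 * int m" using e p q by linarith
  then have n1: "n < 2" using mp by (simp add: mult_less_cancel_right)
  have "n * int m > (-2) * int m" using e p q by linarith
  then have n2: "n > -2" using mp mult_less_cancel_right[of "-2" "int m" n] by linarith
  have "n = -1 \<or> n = 0 \<or> n = 1" using n1 n2 by linarith
  then show ?thesis
  proof (elim disjE)
    assume "n = -1"
    then have "q = p + m" using e by simp
    then show ?thesis using q by simp
  next
    assume "n = 0" then show ?thesis using e by simp
  next
    assume "n = 1"
    then have qq: "p = q + m" using e by simp
    then have "(p + m) mod (2 * m) = q" using q by (simp add: mod_if mult_2)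
    then show ?thesis by simp
  qed
qed

context cg
begin

lemma cedge_in: "W \<in> lists V \<Longrightarrow> E s a \<Longrightarrow> j < 2 * lab s a \<Longrightarrow>
   cedge V E lab W s a j \<in> cell_edges V E lab (cell_of V E lab W s a)"
  unfolding cell_edges_def by blast

lemma cell_in: "W \<in> lists V \<Longrightarrow> E s a \<Longrightarrow> cell_of V E lab W s a \<in> cells V E lab"
  unfolding cells_def by blast

lemma opposite_mem: "opposite V E lab \<sigma> e f \<Longrightarrow> e \<in> cell_edges V E lab \<sigma> \<and> f \<in> cell_edges V E lab \<sigma>"
proof -
  assume "opposite V E lab \<sigma> e f"
  then obtain w a b i where *: "w \<in> lists V" "E a b" "cell_of V E lab w a b = \<sigma>" "i < 2 * lab a b"
    "e = cedge V E lab w a b i" "f = cedge V E lab w a b ((i + lab a b) mod (2 * lab a b))"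
    unfolding opposite_def by blast
  have "0 < 2 * lab a b" using *(4) by simp
  then have "(i + lab a b) mod (2 * lab a b) < 2 * lab a b" by simp
  then show ?thesis unfolding cell_edges_def using * by blast
qed

lemma opposite_cedge: "W \<in> lists V \<Longrightarrow> E a b \<Longrightarrow> j < 2 * lab a b \<Longrightarrow>
   opposite V E lab (cell_of V E lab W a b) (cedge V E lab W a b j) (cedge V E lab W a b ((j + lab a b) mod (2 * lab a b)))"
  unfolding opposite_def by blast

lemma mod_opp: "i < 2 * (m::nat) \<Longrightarrow> ((i + m) mod (2 * m) + m) mod (2 * m) = i"
proof -
  assume "i < 2 * m"
  have "((i + m) mod (2 * m) + m) mod (2 * m) = (i + m + m) mod (2 * m)" by (simp add: mod_add_left_eq)
  also have "\<dots> = (i + 2 * m) mod (2 * m)" by (simp add: mult_2 add.assoc)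
  also have "\<dots> = i" using \<open>i < 2 * m\<close> by simp
  finally show ?thesis .
qed

lemma opposite_sym: "opposite V E lab \<sigma> e f \<Longrightarrow> opposite V E lab \<sigma> f e"
  unfolding opposite_def
proof (elim exE conjE)
  fix w a b i
  assume *: "w \<in> lists V" "E a b" "cell_of V E lab w a b = \<sigma>" "i < 2 * lab a b"
    "e = cedge V E lab w a b i" "f = cedge V E lab w a b ((i + lab a b) mod (2 * lab a b))"
  define i' where "i' = (i + lab a b) mod (2 * lab a b)"
  have "i' < 2 * lab a b" using *(4) i'_def by simp
  moreover have "e = cedge V E lab w a b ((i' + lab a b) mod (2 * lab a b))" using mod_opp[OF *(4)] *(5) i'_def by simp
  ultimately show "\<exists>w a b i. w \<in> lists V \<and> E a b \<and> cell_of V E lab w a b = \<sigma> \<and> i < 2 * lab a b \<and>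
      f = cedge V E lab w a b i \<and> e = cedge V E lab w a b ((i + lab a b) mod (2 * lab a b))"
    using * i'_def by blast
qed

lemma hyp_adj_sym: "hyp_adj V E lab e f \<Longrightarrow> hyp_adj V E lab f e"
  unfolding hyp_adj_def using opposite_sym by blast


lemma cedge_root: "w \<in> lists V \<Longrightarrow> E a b \<Longrightarrow> rho w (Rk a b k) \<in> rootset (cedge V E lab w a b k)"
proof -
  assume w: "w \<in> lists V" and Eab: "E a b"
  have ab: "a \<in> V" "b \<in> V" using E_V Eab by auto
  define g where "g = w @ alt a b k"
  define t where "t = lt a b k"
  have g: "g \<in> lists V" unfolding g_def using w alt_listsV[OF Eab] by auto
  have t: "t \<in> V" unfolding t_def using lt_in[of a b k] ab by auto
  have ce: "cedge V E lab w a b k = {cls V E lab g, cls V E lab (g @ [t])}"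
    unfolding cedge_def g_def t_def alt_Suc_lt by simp
  have r: "rho w (Rk a b k) = rho g (al t)"
    unfolding g_def t_def rho_append R_formula[OF Eab] ..
  show ?thesis unfolding rootset_def mem_Collect_eq
    by (rule exI[of _ g], rule exI[of _ t]) (simp add: r g t ce)
qed

lemma Rk_opp:
  assumes Eab: "E a b" and k: "k < 2 * lab a b"
  shows "pm (Rk a b k) (Rk a b ((k + lab a b) mod (2 * lab a b)))"
proof -
  define m where "m = lab a b"
  have m2: "m \<ge> 2" and tt: "th a b = pi / real m" using th_props[OF Eab] m_def by auto
  have ua: "uu (th a b) (n + m) = - uu (th a b) n" for n using uu_add_m[OF m2 tt] .
  have neg: "Rk a b (j + m) = (\<lambda>x. - Rk a b j x)" for j
  proof -
    have "Suc (j + m) = Suc j + m" by simp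
    then show ?thesis unfolding Rk_def using ua[of "Suc j"] ua[of j] by (simp add: algebra_simps)
  qed
  show ?thesis
  proof (cases "k < m")
    case True
    then have "(k + lab a b) mod (2 * lab a b) = k + m" using m_def by simp
    then show ?thesis using neg[of k] by (simp add: pm_def)
  next
    case False
    define j where "j = k - m"
    have kj: "k = j + m" using False j_def by simp
    have "(k + lab a b) mod (2 * lab a b) = j" using k kj m_def
      by (simp add: mod_if mult_2)
    then show ?thesis using neg[of j] kj by (simp add: pm_def)
  qed
qed

lemma hyp_adj_root: "hyp_adj V E lab e f \<Longrightarrow> \<exists>b\<in>rootset e. \<exists>c\<in>rootset f. pm b c"
proof -
  assume "hyp_adj V E lab e f"
  then obtain \<sigma> where "opposite V E lab \<sigma> e f" unfolding hyp_adj_def by blast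
  then obtain w a b i where *: "w \<in> lists V" "E a b" "i < 2 * lab a b"
    "e = cedge V E lab w a b i" "f = cedge V E lab w a b ((i + lab a b) mod (2 * lab a b))"
    unfolding opposite_def by blast
  have 1: "rho w (Rk a b i) \<in> rootset e" using cedge_root[OF *(1,2)] *(4) by simp
  have 2: "rho w (Rk a b ((i + lab a b) mod (2 * lab a b))) \<in> rootset f" using cedge_root[OF *(1,2)] *(5) by simp
  have 3: "pm (rho w (Rk a b i)) (rho w (Rk a b ((i + lab a b) mod (2 * lab a b))))"
    by (rule pm_rho[OF Rk_opp[OF *(2,3)]])
  show ?thesis using 1 2 3 by blast
qed

lemma roots_path: "(hyp_adj V E lab)\<^sup>*\<^sup>* e f \<Longrightarrow> b \<in> rootset e \<Longrightarrow> c \<in> rootset f \<Longrightarrow> pm b c"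
proof (induction arbitrary: c rule: rtranclp_induct)
  case base
  then show ?case by (rule rootset_pm)
next
  case (step y z)
  obtain b0 c0 where b0: "b0 \<in> rootset y" and c0: "c0 \<in> rootset z" and p: "pm b0 c0"
    using hyp_adj_root[OF step.hyps(2)] by blast
  have "pm b b0" using step.IH[OF step.prems(1) b0] .
  moreover have "pm c0 c" using rootset_pm[OF c0 step.prems(2)] .
  ultimately show ?case using pm_trans[OF pm_trans[OF _ p]] by blast
qed

definition comp :: "'v list set set \<Rightarrow> 'v list set set set" where
  "comp e = {f. (hyp_adj V E lab)\<^sup>*\<^sup>* e f}"

lemma rtc_sym: "(hyp_adj V E lab)\<^sup>*\<^sup>* e f \<Longrightarrow> (hyp_adj V E lab)\<^sup>*\<^sup>* f e"
proof (induction rule: rtranclp_induct)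
  case base then show ?case by simp
next
  case (step y z)
  have "hyp_adj V E lab z y" using hyp_adj_sym[OF step.hyps(2)] .
  then show ?case using step.IH by (rule converse_rtranclp_into_rtranclp)
qed

lemma comp_self: "e \<in> comp e" unfolding comp_def by simp

lemma comp_mem: "f \<in> comp e \<Longrightarrow> comp f = comp e"
proof -
  assume f: "f \<in> comp e"
  then have ef: "(hyp_adj V E lab)\<^sup>*\<^sup>* e f" unfolding comp_def by simp
  have fe: "(hyp_adj V E lab)\<^sup>*\<^sup>* f e" using rtc_sym[OF ef] .
  show ?thesis unfolding comp_def
  proof (intro set_eqI iffI; simp)
    fix x assume "(hyp_adj V E lab)\<^sup>*\<^sup>* f x"
    then show "(hyp_adj V E lab)\<^sup>*\<^sup>* e x" using ef by (rule rtranclp_trans[rotated])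
  next
    fix x assume "(hyp_adj V E lab)\<^sup>*\<^sup>* e x"
    then show "(hyp_adj V E lab)\<^sup>*\<^sup>* f x" using fe by (rule rtranclp_trans[rotated])
  qed
qed

lemma comp_meet: "f \<in> comp e1 \<Longrightarrow> f \<in> comp e2 \<Longrightarrow> comp e1 = comp e2"
proof -
  assume "f \<in> comp e1" "f \<in> comp e2"
  then show ?thesis using comp_mem[of f e1] comp_mem[of f e2] by simp
qed

lemma comp_adj: "f \<in> comp e \<Longrightarrow> hyp_adj V E lab f g \<Longrightarrow> g \<in> comp e"
  unfolding comp_def by (simp add: rtranclp.rtrancl_into_rtrancl)

lemma comp_roots: "f1 \<in> comp e \<Longrightarrow> f2 \<in> comp e \<Longrightarrow> b \<in> rootset f1 \<Longrightarrow> c \<in> rootset f2 \<Longrightarrow> pm b c"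
proof -
  assume f1: "f1 \<in> comp e" and f2: "f2 \<in> comp e" and b: "b \<in> rootset f1" and c: "c \<in> rootset f2"
  have "(hyp_adj V E lab)\<^sup>*\<^sup>* f1 e" using rtc_sym f1 unfolding comp_def by simp
  moreover have "(hyp_adj V E lab)\<^sup>*\<^sup>* e f2" using f2 unfolding comp_def by simp
  ultimately have "(hyp_adj V E lab)\<^sup>*\<^sup>* f1 f2" by (rule rtranclp_trans)
  then show ?thesis using b c by (rule roots_path)
qed

lemma hypergraph_comp: "hypergraph V E lab L \<Longrightarrow> \<exists>e\<in>sigma_edges V E lab. L = comp e"
  unfolding hypergraph_def comp_def by blast

lemma cedge_sigma: "w \<in> lists V \<Longrightarrow> E a b \<Longrightarrow> cedge V E lab w a b k \<in> sigma_edges V E lab"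
proof -
  assume w: "w \<in> lists V" and Eab: "E a b"
  have ab: "a \<in> V" "b \<in> V" using E_V Eab by auto
  have g: "w @ alt a b k \<in> lists V" using w alt_listsV[OF Eab] by auto
  have t: "lt a b k \<in> V" using lt_in[of a b k] ab by auto
  have "cedge V E lab w a b k = {cls V E lab (w @ alt a b k), cls V E lab ((w @ alt a b k) @ [lt a b k])}"
    unfolding cedge_def alt_Suc_lt by simp
  then show ?thesis unfolding sigma_edges_def mem_Collect_eq
    by (intro exI[of _ "w @ alt a b k"] exI[of _ "lt a b k"]) (simp add: g t w alt_listsV[OF Eab])
qed

lemma hypergraph_of: "e \<in> sigma_edges V E lab \<Longrightarrow> hypergraph V E lab (comp e)"
  unfolding hypergraph_def comp_def by blast

lemma seg_cases: "p \<in> segment_pts \<sigma> e f \<Longrightarrow>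
   p = Mid e \<or> p = Mid f \<or> p = Centre \<sigma> \<or> (\<exists>t. p = Half \<sigma> e t) \<or> (\<exists>t. p = Half \<sigma> f t)"
  unfolding segment_pts_def by blast

lemma real_mem: "p \<in> realisation V E lab L \<Longrightarrow>
   \<exists>\<sigma> e f. \<sigma> \<in> cells V E lab \<and> opposite V E lab \<sigma> e f \<and> e \<in> L \<and> f \<in> L \<and> p \<in> segment_pts \<sigma> e f"
  unfolding realisation_def by blast

lemma meet_edges:
  assumes "intersects V E lab L \<sigma>"
  shows "\<exists>e\<in>L. e \<in> cell_edges V E lab \<sigma>"
proof -
  obtain p where p1: "p \<in> realisation V E lab L" and p2: "p \<in> cell_pts V E lab \<sigma>"
    using assms unfolding intersects_def by blast
  obtain \<sigma>' e f where op: "opposite V E lab \<sigma>' e f" and ef: "e \<in> L" "f \<in> L" and ps: "p \<in> segment_pts \<sigma>' e f"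
    using real_mem[OF p1] by blast
  have sc: "p = Mid e \<or> p = Mid f \<or> p = Centre \<sigma>' \<or> (\<exists>t. p = Half \<sigma>' e t) \<or> (\<exists>t. p = Half \<sigma>' f t)"
    using seg_cases[OF ps] .
  have "p = Centre \<sigma> \<or> (\<exists>x. p = Mid x \<and> x \<in> cell_edges V E lab \<sigma>) \<or> (\<exists>x t. p = Half \<sigma> x t \<and> x \<in> cell_edges V E lab \<sigma>)"
    using p2 unfolding cell_pts_def by blast
  then show ?thesis
  proof (elim disjE exE conjE)
    assume "p = Centre \<sigma>"
    then have "\<sigma>' = \<sigma>" using sc by auto
    then show ?thesis using opposite_mem[OF op] ef by blast
  next
    fix x assume "p = Mid x" "x \<in> cell_edges V E lab \<sigma>"
    then show ?thesis using sc ef by auto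
  next
    fix x t assume "p = Half \<sigma> x t" "x \<in> cell_edges V E lab \<sigma>"
    then show ?thesis using sc ef by auto
  qed
qed

lemma int_edge:
  assumes e: "e \<in> comp e0" and \<tau>: "\<tau> \<in> cells V E lab" and et: "e \<in> cell_edges V E lab \<tau>"
  shows "intersects V E lab (comp e0) \<tau>"
proof -
  obtain w a b i where w: "w \<in> lists V" and Eab: "E a b" and ct: "cell_of V E lab w a b = \<tau>"
    and i: "i < 2 * lab a b" and ee: "e = cedge V E lab w a b i"
    using et unfolding cell_edges_def by blast
  define f where "f = cedge V E lab w a b ((i + lab a b) mod (2 * lab a b))"
  have op: "opposite V E lab \<tau> e f" using opposite_cedge[OF w Eab i] ct ee f_def by simp
  have "hyp_adj V E lab e f" unfolding hyp_adj_def using op \<tau> by blast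
  then have f: "f \<in> comp e0" using comp_adj[OF e] by blast
  have "Mid e \<in> segment_pts \<tau> e f" unfolding segment_pts_def by simp
  then have "Mid e \<in> realisation V E lab (comp e0)" unfolding realisation_def using \<tau> op e f by blast
  moreover have "Mid e \<in> cell_pts V E lab \<tau>" unfolding cell_pts_def using et by blast
  ultimately show ?thesis unfolding intersects_def by blast
qed

lemma disj_real:
  assumes d: "L1 \<inter> L2 = {}"
    and nc: "\<And>c y1 y2. c \<in> cells V E lab \<Longrightarrow> y1 \<in> L1 \<Longrightarrow> y2 \<in> L2 \<Longrightarrow> y1 \<in> cell_edges V E lab c \<Longrightarrow> y2 \<in> cell_edges V E lab c \<Longrightarrow> False"
  shows "realisation V E lab L1 \<inter> realisation V E lab L2 = {}"
proof (rule ccontr)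
  assume "realisation V E lab L1 \<inter> realisation V E lab L2 \<noteq> {}"
  then obtain p where p1: "p \<in> realisation V E lab L1" and p2: "p \<in> realisation V E lab L2" by blast
  obtain c1 e1 f1 where c1: "c1 \<in> cells V E lab" and op1: "opposite V E lab c1 e1 f1" and ef1: "e1 \<in> L1" "f1 \<in> L1"
    and ps1: "p \<in> segment_pts c1 e1 f1" using real_mem[OF p1] by blast
  obtain c2 e2 f2 where c2: "c2 \<in> cells V E lab" and op2: "opposite V E lab c2 e2 f2" and ef2: "e2 \<in> L2" "f2 \<in> L2"
    and ps2: "p \<in> segment_pts c2 e2 f2" using real_mem[OF p2] by blast
  have s1: "p = Mid e1 \<or> p = Mid f1 \<or> p = Centre c1 \<or> (\<exists>t. p = Half c1 e1 t) \<or> (\<exists>t. p = Half c1 f1 t)"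
    using seg_cases[OF ps1] .
  have s2: "p = Mid e2 \<or> p = Mid f2 \<or> p = Centre c2 \<or> (\<exists>t. p = Half c2 e2 t) \<or> (\<exists>t. p = Half c2 f2 t)"
    using seg_cases[OF ps2] .
  show False
  proof (cases p)
    case (Mid x)
    then have "x \<in> L1" "x \<in> L2" using s1 s2 ef1 ef2 by auto
    then show False using d by blast
  next
    case (Centre c)
    then have "c = c1" "c = c2" using s1 s2 by auto
    then show False using nc[OF c1 ef1(1) ef2(1)] opposite_mem[OF op1] opposite_mem[OF op2] by blast
  next
    case (Half c x t)
    then have "x \<in> L1" "x \<in> L2" using s1 s2 ef1 ef2 by auto
    then show False using d by blast
  qed
qed

lemma Bf_Rk_al: "E x y \<Longrightarrow> z \<in> V \<Longrightarrow> Bf (Rk x y p) (al z) = uu (th x y) (Suc p) * cc x z + uu (th x y) p * cc y z"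
proof -
  assume Exy: "E x y" and z: "z \<in> V"
  have xy: "x \<in> V" "y \<in> V" using E_V Exy by auto
  show ?thesis unfolding Rk_def Bf_lin_l Bf_al_al[OF xy(1) z] Bf_al_al[OF xy(2) z] ..
qed

lemma cell_cos: "E x y \<Longrightarrow> Bf (Rk x y p) (Rk x y q) = cos ((real p - real q) * th x y)"
proof -
  assume Exy: "E x y"
  have xy: "x \<in> V" "y \<in> V" using E_V Exy by auto
  have m2: "lab x y \<ge> 2" and tt: "th x y = pi / real (lab x y)" using th_props[OF Exy] by auto
  have cxy: "cc x y = - cos (th x y)" "cc y x = - cos (th x y)" using cc_E[OF Exy] cc_sym by auto
  have "Bf (Rk x y p) (Rk x y q) = uu (th x y) (Suc q) * Bf (Rk x y p) (al x) + uu (th x y) q * Bf (Rk x y p) (al y)"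
    unfolding Rk_def[of x y q] Bf_lin_r ..
  also have "\<dots> = uu (th x y) (Suc p) * uu (th x y) (Suc q) + uu (th x y) p * uu (th x y) q
      - cos (th x y) * (uu (th x y) (Suc p) * uu (th x y) q + uu (th x y) p * uu (th x y) (Suc q))"
    unfolding Bf_Rk_al[OF Exy xy(1)] Bf_Rk_al[OF Exy xy(2)] cxy cc_self by (simp add: algebra_simps)
  also have "\<dots> = cos ((real p - real q) * th x y)" by (rule uu_B[OF m2 tt])
  finally show ?thesis .
qed

lemma F_bound:
  assumes Esa: "E s a" and Esc: "E s c" and ac: "a \<noteq> c"
    and tri: "\<not> (E a c \<and> (lab s a = 2 \<or> lab s c = 2 \<or> lab a c = 2))"
    and k1: "1 \<le> k" and k2: "k \<le> lab s a - 1"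
  shows "\<exists>j. (j = 1 \<or> j = lab s c - 1) \<and> \<bar>Bf (Rk s a k) (Rk s c j)\<bar> \<ge> 1"
proof -
  define m1 where "m1 = lab s a"
  define m2 where "m2 = lab s c"
  define t1 where "t1 = th s a"
  define t2 where "t2 = th s c"
  have sac: "s \<in> V" "a \<in> V" "c \<in> V" using E_V Esa Esc by auto
  have m1: "m1 \<ge> 2" "t1 = pi / real m1" using th_props[OF Esa] m1_def t1_def by auto
  have m2: "m2 \<ge> 2" "t2 = pi / real m2" using th_props[OF Esc] m2_def t2_def by auto
  have c1: "cos t1 \<ge> 0" using cos_t_nonneg[OF m1] .
  have c2: "cos t2 \<ge> 0" using cos_t_nonneg[OF m2] .
  have css: "cc s c = - cos t2" using cc_E[OF Esc] t2_def by simp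
  have cas: "cc a s = - cos t1" using cc_E[OF Esa] cc_sym t1_def by simp
  define c3 where "c3 = - cc a c"
  have c3: "c3 \<ge> 0" "\<not> E a c \<Longrightarrow> c3 = 1"
  proof -
    show "\<not> E a c \<Longrightarrow> c3 = 1" unfolding c3_def cc_def using ac by simp
    show "c3 \<ge> 0"
    proof (cases "E a c")
      case True
      then have "c3 = cos (th a c)" unfolding c3_def cc_def using ac by simp
      then show ?thesis using cos_t_nonneg th_props[OF True] by auto
    next
      case False then show ?thesis unfolding c3_def cc_def using ac by simp
    qed
  qed
  have R1: "Rk s c (m2 - 1) = al c"
  proof -
    have "Suc (m2 - 1) = m2" using m2 by simp
    then show ?thesis unfolding Rk_def using uu_m[OF m2] uu_m1[OF m2] m2_def t2_def
      by (simp add: fun_eq_iff)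
  qed
  have u2: "uu t2 2 = 2 * cos t2" using uu_rec[of t2 0] uu_1[OF m2] by (simp add: numeral_2_eq_2)
  have R2: "Rk s c 1 = (\<lambda>x. (2 * cos t2) * al s x + 1 * al c x)"
    unfolding Rk_def using u2 uu_1[OF m2] t2_def by (simp add: numeral_2_eq_2)
  have Bc: "Bf (Rk s a k) (al c) = - (cos t2 * uu t1 (Suc k) + c3 * uu t1 k)"
    unfolding Bf_Rk_al[OF Esa sac(3)] css c3_def t1_def t2_def by simp
  have Bs: "Bf (Rk s a k) (al s) = uu t1 (Suc k) - cos t1 * uu t1 k"
    unfolding Bf_Rk_al[OF Esa sac(1)] cas cc_self t1_def by simp
  have tri': "E a c \<Longrightarrow> m1 \<ge> 3 \<and> m2 \<ge> 3 \<and> lab a c \<ge> 3"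
    using tri m1 m2 lab_ge m1_def m2_def by fastforce
  show ?thesis
  proof (cases "k \<le> m1 - 2")
    case True
    have uk: "uu t1 k \<ge> 1" using uu_ge1[OF m1 k1] k2 m1_def by simp
    have uk1: "uu t1 (Suc k) \<ge> 1" using uu_ge1[OF m1, of "Suc k"] True m1 by simp
    have c23: "cos t2 + c3 \<ge> 1"
    proof (cases "E a c")
      case True
      then have h: "m2 \<ge> 3" "lab a c \<ge> 3" using tri' by auto
      have "cos t2 \<ge> 1/2" using cos_t_ge_half[OF m2 h(1)] .
      moreover have "c3 = cos (th a c)" unfolding c3_def cc_def using ac True by simp
      moreover have "cos (th a c) \<ge> 1/2" using cos_t_ge_half[of "lab a c" "th a c"] th_props[OF True] h(2) by simp
      ultimately show ?thesis by simp
    next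
      case False then show ?thesis using c3 c2 by simp
    qed
    have "cos t2 * uu t1 (Suc k) \<ge> cos t2" using c2 uk1 by (simp add: mult_le_cancel_left1)
    moreover have "c3 * uu t1 k \<ge> c3" using c3 uk by (simp add: mult_le_cancel_left1)
    ultimately have "\<bar>Bf (Rk s a k) (Al c)\<bar> \<ge> 1" if "Al = al" for Al using Bc c23 that by simp
    then have "\<bar>Bf (Rk s a k) (Rk s c (m2 - 1))\<bar> \<ge> 1" using R1 by simp
    then show ?thesis using m2_def by blast
  next
    case False
    then have kk: "k = m1 - 1" using k2 m1_def by simp
    have uk: "uu t1 k = 1" using uu_m1[OF m1] kk by simp
    have uk1: "uu t1 (Suc k) = 0" using uu_m[OF m1] kk m1 by simp
    show ?thesis
    proof (cases "E a c")
      case False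
      have "Bf (Rk s a k) (Rk s c (m2 - 1)) = -1" using R1 Bc uk uk1 c3(2)[OF False] by simp
      then show ?thesis using m2_def by (intro exI[of _ "m2 - 1"]) simp
    next
      case True
      then have h: "m1 \<ge> 3" "m2 \<ge> 3" "lab a c \<ge> 3" using tri' by auto
      have h1: "cos t1 \<ge> 1/2" using cos_t_ge_half[OF m1 h(1)] .
      have h2: "cos t2 \<ge> 1/2" using cos_t_ge_half[OF m2 h(2)] .
      have "c3 = cos (th a c)" unfolding c3_def cc_def using ac True by simp
      moreover have "cos (th a c) \<ge> 1/2" using cos_t_ge_half[of "lab a c" "th a c"] th_props[OF True] h(3) by simp
      ultimately have h3: "c3 \<ge> 1/2" by simp
      have "Bf (Rk s a k) (Rk s c 1) = 2 * cos t2 * Bf (Rk s a k) (al s) + 1 * Bf (Rk s a k) (al c)"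
        unfolding R2 Bf_lin_r ..
      also have "\<dots> = - (2 * cos t1 * cos t2 + c3)" unfolding Bs Bc uk uk1 by simp
      finally have eq: "Bf (Rk s a k) (Rk s c 1) = - (2 * cos t1 * cos t2 + c3)" .
      have "cos t1 * cos t2 \<ge> 1/2 * (1/2)" using h1 h2 by (intro mult_mono) auto
      then have "\<bar>Bf (Rk s a k) (Rk s c 1)\<bar> \<ge> 1" using eq h3 by simp
      then show ?thesis by blast
    qed
  qed
qed

lemma main_lemma:
  assumes tri: "\<not> (\<exists>a b c. E a b \<and> E b c \<and> E a c \<and> (lab a b = 2 \<or> lab b c = 2 \<or> lab a c = 2))"
    and \<sigma>: "\<sigma> \<in> cells V E lab" and \<tau>: "\<tau> \<in> cells V E lab"
    and sh: "cell_edges V E lab \<sigma> \<inter> cell_edges V E lab \<tau> \<noteq> {}"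
    and hs: "hypergraph V E lab L\<sigma>" and isec: "intersects V E lab L\<sigma> \<sigma>"
  shows "\<exists>L\<tau>. hypergraph V E lab L\<tau> \<and> intersects V E lab L\<tau> \<tau>
           \<and> (realisation V E lab L\<tau> \<inter> realisation V E lab L\<sigma> = {} \<or> L\<tau> = L\<sigma>)"
proof -
  obtain es where es: "es \<in> sigma_edges V E lab" and Ls: "L\<sigma> = comp es"
    using hypergraph_comp[OF hs] by blast
  show ?thesis
  proof (cases "\<exists>e\<in>L\<sigma>. e \<in> cell_edges V E lab \<tau>")
    case True
    then obtain e where e: "e \<in> L\<sigma>" "e \<in> cell_edges V E lab \<tau>" by blast
    have "intersects V E lab (comp es) \<tau>" using int_edge[of e es \<tau>] e \<tau> Ls by simp
    then show ?thesis using hs Ls by blast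
  next
    case False
    note no\<tau> = False
    obtain e0 where e0\<sigma>: "e0 \<in> cell_edges V E lab \<sigma>" and e0\<tau>: "e0 \<in> cell_edges V E lab \<tau>" using sh by blast
    obtain w a b where w: "w \<in> lists V" and Eab: "E a b" and \<sigma>d: "\<sigma> = cell_of V E lab w a b"
      using \<sigma> unfolding cells_def by blast
    obtain i where i: "i < 2 * lab a b" and e0i: "e0 = cedge V E lab w a b i"
      using cell_edges_nf[OF w Eab] e0\<sigma> \<sigma>d by blast
    define W where "W = w @ alt a b i"
    define s where "s = lt a b i"
    define a' where "a' = (if s = a then b else a)"
    have abV: "a \<in> V" "b \<in> V" using E_V Eab by auto
    have W: "W \<in> lists V" unfolding W_def using w alt_listsV[OF Eab] by auto
    have sa': "{a,b} = {s,a'}" unfolding s_def a'_def lt_def by auto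
    have Esa: "E s a'" unfolding s_def a'_def lt_def using Eab E_sym[OF Eab] E_neq[OF Eab] by auto
    have sV: "s \<in> V" using E_V Esa by auto
    have \<sigma>': "\<sigma> = cell_of V E lab W s a'"
      using cell_rebase[OF w W abV alt_lists[of a b i] _ sa'] cox_eq.refl \<sigma>d unfolding W_def by blast
    have e0W: "e0 = {cls V E lab W, cls V E lab (W @ [s])}"
      unfolding e0i cedge_def W_def s_def alt_Suc_lt by simp
    obtain w' c d where w': "w' \<in> lists V" and Ecd: "E c d" and \<tau>d: "\<tau> = cell_of V E lab w' c d"
      using \<tau> unfolding cells_def by blast
    obtain j0 where e0j: "e0 = cedge V E lab w' c d j0"
      using cell_edges_nf[OF w' Ecd] e0\<tau> \<tau>d by blast
    define q where "q = alt c d j0"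
    define t where "t = lt c d j0"
    have cdV: "c \<in> V" "d \<in> V" using E_V Ecd by auto
    have qV: "w' @ q \<in> lists V" unfolding q_def using w' alt_listsV[OF Ecd] by auto
    have tcd: "t \<in> {c,d}" unfolding t_def by (rule lt_in)
    have tV: "t \<in> V" using tcd cdV by auto
    have e0q: "e0 = {cls V E lab (w' @ q), cls V E lab ((w' @ q) @ [t])}"
      unfolding e0j cedge_def q_def t_def alt_Suc_lt by simp
    have lb: "s = t \<and> (cox_eq V E lab W (w' @ q) \<or> cox_eq V E lab W ((w' @ q) @ [t]))"
      using edge_label[OF W qV sV tV] e0W e0q by simp
    obtain u where u: "u \<in> lists {c,d}" and cu: "cox_eq V E lab (w' @ u) W"
    proof (cases "cox_eq V E lab W (w' @ q)")
      case True
      moreover have "q \<in> lists {c,d}" unfolding q_def by (rule alt_lists)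
      ultimately show ?thesis using that cox_eq.sym by blast
    next
      case False
      then have "cox_eq V E lab ((w' @ q) @ [t]) W" using lb cox_eq.sym by blast
      moreover have "q @ [t] \<in> lists {c,d}" unfolding q_def using alt_lists[of c d j0] tcd by auto
      ultimately show ?thesis using that[of "q @ [t]"] by simp
    qed
    define c' where "c' = (if s = c then d else c)"
    have scd: "s \<in> {c,d}" using lb tcd by simp
    have sc': "{c,d} = {s,c'}" unfolding c'_def using scd by auto
    have Esc: "E s c'" unfolding c'_def using scd Ecd E_sym[OF Ecd] E_neq[OF Ecd] by auto
    have \<tau>': "\<tau> = cell_of V E lab W s c'" using cell_rebase[OF w' W cdV u cu sc'] \<tau>d by simp
    have ac: "a' \<noteq> c'"
    proof
      assume "a' = c'"
      then have "\<sigma> = \<tau>" using \<sigma>' \<tau>' by simp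
      then show False using meet_edges[OF isec] no\<tau> by blast
    qed
    obtain e1 where e1: "e1 \<in> L\<sigma>" "e1 \<in> cell_edges V E lab \<sigma>" using meet_edges[OF isec] by blast
    define m1 where "m1 = lab s a'"
    have m1: "m1 \<ge> 2" using lab_ge[OF Esa] m1_def by simp
    obtain k0 where k0: "k0 < 2 * m1" and e1k: "e1 = cedge V E lab W s a' k0"
      using cell_edges_nf[OF W Esa] e1(2) \<sigma>' m1_def by blast
    have ce0: "cedge V E lab W s a' 0 = e0" unfolding cedge_def e0W by simp
    have e0n: "e0 \<notin> L\<sigma>" using no\<tau> e0\<tau> by blast
    have hadj: "hyp_adj V E lab (cedge V E lab W s a' jj) (cedge V E lab W s a' ((jj + m1) mod (2 * m1)))"
      if jj: "jj < 2 * m1" for jj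
    proof -
      have "opposite V E lab \<sigma> (cedge V E lab W s a' jj) (cedge V E lab W s a' ((jj + m1) mod (2 * m1)))"
        using opposite_cedge[OF W Esa] jj \<sigma>' m1_def by simp
      then show ?thesis unfolding hyp_adj_def using \<sigma> by blast
    qed
    have k0ne: "k0 \<noteq> 0"
    proof
      assume "k0 = 0"
      then have "e1 = e0" using e1k ce0 by simp
      then show False using e1(1) e0n by simp
    qed
    have k0m: "k0 \<noteq> m1"
    proof
      assume km: "k0 = m1"
      have "(k0 + m1) mod (2 * m1) = 0" using km by (simp add: mult_2)
      then have "hyp_adj V E lab e1 e0" using hadj[OF k0] e1k ce0 by simp
      then have "e0 \<in> comp es" using comp_adj e1(1) Ls by blast
      then show False using e0n Ls by simp
    qed
    define k where "k = (if k0 < m1 then k0 else k0 - m1)"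
    have k1: "1 \<le> k" "k \<le> lab s a' - 1" unfolding k_def using k0 k0ne k0m m1_def by auto
    have e1': "cedge V E lab W s a' k \<in> L\<sigma>"
    proof (cases "k0 < m1")
      case True then show ?thesis using e1 e1k k_def by simp
    next
      case False
      then have "(k0 + m1) mod (2 * m1) = k" unfolding k_def using k0 by (simp add: mod_if mult_2)
      then have "hyp_adj V E lab e1 (cedge V E lab W s a' k)" using hadj[OF k0] e1k by simp
      then show ?thesis using comp_adj e1(1) Ls by blast
    qed
    define \<beta>1 where "\<beta>1 = rho W (Rk s a' k)"
    have b1: "\<beta>1 \<in> rootset (cedge V E lab W s a' k)" unfolding \<beta>1_def by (rule cedge_root[OF W Esa])
    have tri': "\<not> (E a' c' \<and> (lab s a' = 2 \<or> lab s c' = 2 \<or> lab a' c' = 2))"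
    proof
      assume h: "E a' c' \<and> (lab s a' = 2 \<or> lab s c' = 2 \<or> lab a' c' = 2)"
      have "E a' s" using E_sym[OF Esa] .
      moreover have "lab a' s = lab s a'" using lab_sym[OF Esa] .
      ultimately have "E a' s \<and> E s c' \<and> E a' c' \<and> (lab a' s = 2 \<or> lab s c' = 2 \<or> lab a' c' = 2)"
        using h Esc by simp
      then show False using tri by blast
    qed
    obtain j where j: "j = 1 \<or> j = lab s c' - 1" and Fb: "\<bar>Bf (Rk s a' k) (Rk s c' j)\<bar> \<ge> 1"
      using F_bound[OF Esa Esc ac tri' k1] by blast
    have jlt: "j < 2 * lab s c'" using j lab_ge[OF Esc] by auto
    define f where "f = cedge V E lab W s c' j"
    have fS: "f \<in> sigma_edges V E lab" unfolding f_def by (rule cedge_sigma[OF W Esc])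
    have f\<tau>: "f \<in> cell_edges V E lab \<tau>" unfolding f_def \<tau>' by (rule cedge_in[OF W Esc jlt])
    have hyp: "hypergraph V E lab (comp f)" by (rule hypergraph_of[OF fS])
    have int: "intersects V E lab (comp f) \<tau>" by (rule int_edge[OF comp_self \<tau> f\<tau>])
    have b2: "rho W (Rk s c' j) \<in> rootset f" unfolding f_def by (rule cedge_root[OF W Esc])
    have disj: "comp f = L\<sigma> \<or> realisation V E lab (comp f) \<inter> realisation V E lab L\<sigma> = {}"
    proof (cases "comp f \<inter> L\<sigma> = {}")
      case False
      then obtain y where "y \<in> comp f" "y \<in> comp es" using Ls by blast
      then have "comp f = comp es" by (rule comp_meet)
      then show ?thesis using Ls by simp
    next
      case True
      have "realisation V E lab (comp f) \<inter> realisation V E lab L\<sigma> = {}"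
      proof (rule disj_real[OF True])
        fix cl y1 y2
        assume cl: "cl \<in> cells V E lab" and y1: "y1 \<in> comp f" and y2: "y2 \<in> L\<sigma>"
          and y1c: "y1 \<in> cell_edges V E lab cl" and y2c: "y2 \<in> cell_edges V E lab cl"
        obtain g x y where g: "g \<in> lists V" and Exy: "E x y" and cld: "cl = cell_of V E lab g x y"
          using cl unfolding cells_def by blast
        define m3 where "m3 = lab x y"
        obtain p where p: "p < 2 * m3" and y1p: "y1 = cedge V E lab g x y p"
          using cell_edges_nf[OF g Exy] y1c cld m3_def by blast
        obtain p' where p': "p' < 2 * m3" and y2p: "y2 = cedge V E lab g x y p'"
          using cell_edges_nf[OF g Exy] y2c cld m3_def by blast
        have r1: "rho g (Rk x y p) \<in> rootset y1" unfolding y1p by (rule cedge_root[OF g Exy])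
        have r2: "rho g (Rk x y p') \<in> rootset y2" unfolding y2p by (rule cedge_root[OF g Exy])
        have pm1: "pm (rho W (Rk s c' j)) (rho g (Rk x y p))" by (rule comp_roots[OF comp_self y1 b2 r1])
        have pm2: "pm \<beta>1 (rho g (Rk x y p'))" using comp_roots[OF e1'[unfolded Ls] y2[unfolded Ls] b1 r2] .
        have "\<bar>Bf (rho g (Rk x y p)) (rho g (Rk x y p'))\<bar> = \<bar>Bf (rho W (Rk s c' j)) \<beta>1\<bar>"
          by (rule pm_Bf[OF pm1 pm2])
        also have "\<dots> = \<bar>Bf (Rk s a' k) (Rk s c' j)\<bar>" unfolding \<beta>1_def Bf_rho[OF W] by (simp add: Bf_sym)
        finally have "\<bar>Bf (Rk x y p) (Rk x y p')\<bar> \<ge> 1" using Fb Bf_rho[OF g] by simp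
        then have "\<bar>cos ((real p - real p') * th x y)\<bar> \<ge> 1" using cell_cos[OF Exy] by simp
        moreover have "m3 \<ge> 2" "th x y = pi / real m3" using th_props[OF Exy] m3_def by auto
        ultimately have pp: "p' = p \<or> p' = (p + m3) mod (2 * m3)" using cos_pm1 p p' by blast
        have "y2 \<in> comp f"
        proof (cases "p' = p")
          case True then show ?thesis using y1 y1p y2p by simp
        next
          case False
          then have pp': "p' = (p + m3) mod (2 * m3)" using pp by simp
          have "opposite V E lab cl y1 y2" using opposite_cedge[OF g Exy] p cld y1p y2p pp' m3_def by simp
          then have "hyp_adj V E lab y1 y2" unfolding hyp_adj_def using cl by blast
          then show ?thesis using comp_adj y1 by blast
        qed
        then show False using True y2 by blast
      qed
      then show ?thesis by simp
    qed
    show ?thesis using hyp int disj by blast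
  qed
qed

end

theorem lemmaA4:
  fixes V :: "'v set" and E :: "'v \<Rightarrow> 'v \<Rightarrow> bool" and lab :: "'v \<Rightarrow> 'v \<Rightarrow> nat"
  assumes "labelled_graph V E lab"
    and "\<not> (\<exists>a b c. E a b \<and> E b c \<and> E a c \<and> (lab a b = 2 \<or> lab b c = 2 \<or> lab a c = 2))"
    and "\<sigma> \<in> cells V E lab" and "\<tau> \<in> cells V E lab"
    and "cell_edges V E lab \<sigma> \<inter> cell_edges V E lab \<tau> \<noteq> {}"
    and "hypergraph V E lab \<Lambda>\<sigma>" and "intersects V E lab \<Lambda>\<sigma> \<sigma>"
  shows "\<exists>\<Lambda>\<tau>. hypergraph V E lab \<Lambda>\<tau> \<and> intersects V E lab \<Lambda>\<tau> \<tau>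
           \<and> (realisation V E lab \<Lambda>\<tau> \<inter> realisation V E lab \<Lambda>\<sigma> = {} \<or> \<Lambda>\<tau> = \<Lambda>\<sigma>)"
proof -
  interpret cg V E lab by unfold_locales (rule assms(1))
  show ?thesis by (rule main_lemma[OF assms(2-7)])
qed

end
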